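(* Let $(p,m,r)\in\mathbb{Z}_{\ge0}^3$ with $2p+m+r=n$. Then the variety $\mathscr{Z}_{p,m,r}$ is irreducible, and $\mathscr{Z}_{p,m,r}$ equals the Zariski closure of the image of the morphism $\phi_{p,m,r}:GL_n(\mathbb{C})\times\mathbb{C}^{p+m}\times\mathbb{C}^{2p+r}\to\mathscr{Z}_n$ defined by $\phi_{p,m,r}(g,(a_1,\dots,a_{p+m}),(b_1,c_1,\dots,b_p,c_p,b_{p+1},\dots,b_{p+r}))=(gAg^{-1},gBg^{-1})$, where $A=\mathrm{diag}(a_1,-a_1,\dots,a_p,-a_p,a_{p+1},\dots,a_{p+m},0,\dots,0)$ ($r$ zeros) and $B=\mathrm{diag}\left(\begin{bmatrix}0&b_1\\c_1&0\end{bmatrix},\dots,\begin{bmatrix}0&b_p\\c_p&0\end{bmatrix},0,\dots,0,b_{p+1},\dots,b_{p+r}\right)$ (with $m$ zeros).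
   Context: $\mathscr{Z}_n=\{(A,B)\in M_n(\mathbb{C})^2 : AB+BA=0\}$, with $GL_n(\mathbb{C})$ acting by simultaneous conjugation. $\mathscr{Z}_{p,m,r}$ is the Zariski closure in $\mathscr{Z}_n$ of the union of the $GL_n$-orbits of all pairs $(A,B)\in\mathscr{Z}_n$ with $A=\mathrm{diag}(a_1,-a_1,\dots,a_p,-a_p,a_{p+1},\dots,a_{p+m},0,\dots,0)$ ($r$ zeros), where $a_i\in\mathbb{C}^*$ and $a_i\ne\pm a_j$ for $i\ne j$. *)

theory Defs
  imports Complex_Main "Jordan_Normal_Form.Matrix"
begin

type_synonym cpair = "complex mat \<times> complex mat"

inductive_set poly_fun :: "nat \<Rightarrow> (cpair \<Rightarrow> complex) set" for n :: nat where
  pf_const: "(\<lambda>_. c) \<in> poly_fun n"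
| pf_fst: "i < n \<Longrightarrow> j < n \<Longrightarrow> (\<lambda>X. fst X $$ (i, j)) \<in> poly_fun n"
| pf_snd: "i < n \<Longrightarrow> j < n \<Longrightarrow> (\<lambda>X. snd X $$ (i, j)) \<in> poly_fun n"
| pf_add: "f \<in> poly_fun n \<Longrightarrow> g \<in> poly_fun n \<Longrightarrow> (\<lambda>X. f X + g X) \<in> poly_fun n"
| pf_mult: "f \<in> poly_fun n \<Longrightarrow> g \<in> poly_fun n \<Longrightarrow> (\<lambda>X. f X * g X) \<in> poly_fun n"

definition pair_space :: "nat \<Rightarrow> cpair set" where
  "pair_space n = {X. fst X \<in> carrier_mat n n \<and> snd X \<in> carrier_mat n n}"

definition zariski_closed :: "nat \<Rightarrow> cpair set \<Rightarrow> bool" where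
  "zariski_closed n S \<longleftrightarrow>
     (\<exists>F \<subseteq> poly_fun n. S = {X \<in> pair_space n. \<forall>f\<in>F. f X = 0})"

definition zariski_closure :: "nat \<Rightarrow> cpair set \<Rightarrow> cpair set" where
  "zariski_closure n S = \<Inter>{T. zariski_closed n T \<and> S \<subseteq> T}"

definition zariski_irreducible :: "nat \<Rightarrow> cpair set \<Rightarrow> bool" where
  "zariski_irreducible n S \<longleftrightarrow> S \<noteq> {} \<and>
     (\<forall>C1 C2. zariski_closed n C1 \<longrightarrow> zariski_closed n C2 \<longrightarrow> S \<subseteq> C1 \<union> C2
        \<longrightarrow> S \<subseteq> C1 \<or> S \<subseteq> C2)"

definition anticomm_var :: "nat \<Rightarrow> cpair set" where
  "anticomm_var n = {(A, B). A \<in> carrier_mat n n \<and> B \<in> carrier_mat n n \<and> A * B + B * A = 0\<^sub>m n n}"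

text \<open>Diagonal entries (a_1,-a_1,...,a_p,-a_p,a_{p+1},...,a_{p+m},0,...,0) (r zeros);
 the parameter a is 0-indexed: a 0 = a_1, etc.\<close>
definition diag_entries :: "nat \<Rightarrow> nat \<Rightarrow> nat \<Rightarrow> (nat \<Rightarrow> complex) \<Rightarrow> complex list" where
  "diag_entries p m r a =
     concat (map (\<lambda>i. [a i, - a i]) [0..<p]) @ map a [p..<p+m] @ replicate r 0"

definition A_mat :: "nat \<Rightarrow> nat \<Rightarrow> nat \<Rightarrow> (nat \<Rightarrow> complex) \<Rightarrow> complex mat" where
  "A_mat p m r a = (let n = 2*p+m+r; d = diag_entries p m r a in
     mat n n (\<lambda>(i, j). if i = j then d ! i else 0))"

text \<open>B = diag([0 b_1; c_1 0], ..., [0 b_p; c_p 0], 0 (m times), b_{p+1}, ..., b_{p+r}),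
 0-indexed: b k = b_{k+1}, c k = c_{k+1}.\<close>
definition B_mat :: "nat \<Rightarrow> nat \<Rightarrow> nat \<Rightarrow> (nat \<Rightarrow> complex) \<Rightarrow> (nat \<Rightarrow> complex) \<Rightarrow> complex mat" where
  "B_mat p m r b c = (let n = 2*p+m+r in
     mat n n (\<lambda>(i, j).
       if i < 2*p \<and> j < 2*p \<and> i div 2 = j div 2 \<and> even i \<and> j = i + 1 then b (i div 2)
       else if i < 2*p \<and> j < 2*p \<and> i div 2 = j div 2 \<and> odd i \<and> i = j + 1 then c (i div 2)
       else if 2*p+m \<le> i \<and> i = j then b (p + (i - (2*p+m)))
       else 0))"

definition GL_inv :: "nat \<Rightarrow> complex mat \<Rightarrow> complex mat \<Rightarrow> bool" where
  "GL_inv n g h \<longleftrightarrow> g \<in> carrier_mat n n \<and> h \<in> carrier_mat n n \<and> g * h = 1\<^sub>m n \<and> h * g = 1\<^sub>m n"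

definition generic_params :: "nat \<Rightarrow> nat \<Rightarrow> (nat \<Rightarrow> complex) \<Rightarrow> bool" where
  "generic_params p m a \<longleftrightarrow> (\<forall>i < p+m. a i \<noteq> 0) \<and>
     (\<forall>i < p+m. \<forall>j < p+m. i \<noteq> j \<longrightarrow> a i \<noteq> a j \<and> a i \<noteq> - a j)"

definition Z_pmr :: "nat \<Rightarrow> nat \<Rightarrow> nat \<Rightarrow> cpair set" where
  "Z_pmr p m r = (let n = 2*p+m+r in zariski_closure n
     {(g * A_mat p m r a * h, g * B * h) | g h a B.
        GL_inv n g h \<and> generic_params p m a \<and> (A_mat p m r a, B) \<in> anticomm_var n})"

definition phi_image :: "nat \<Rightarrow> nat \<Rightarrow> nat \<Rightarrow> cpair set" where
  "phi_image p m r = (let n = 2*p+m+r in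
     {(g * A_mat p m r a * h, g * B_mat p m r b c * h) | g h a b c. GL_inv n g h})"

end

theory Submission
  imports Defs "HOL-Library.Nat_Bijection" "Jordan_Normal_Form.Jordan_Normal_Form_Existence"
begin

inductive_set pf :: "((nat \<Rightarrow> complex) \<Rightarrow> complex) set" where
  pfc: "(\<lambda>_. c) \<in> pf"
| pfv: "(\<lambda>x. x i) \<in> pf"
| pfa: "f \<in> pf \<Longrightarrow> g \<in> pf \<Longrightarrow> (\<lambda>x. f x + g x) \<in> pf"
| pfm: "f \<in> pf \<Longrightarrow> g \<in> pf \<Longrightarrow> (\<lambda>x. f x * g x) \<in> pf"

lemma pf_neg: "f \<in> pf \<Longrightarrow> (\<lambda>x. - f x) \<in> pf"
  using pfm[OF pfc[of "-1"]] by simp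

lemma pf_diff: "f \<in> pf \<Longrightarrow> g \<in> pf \<Longrightarrow> (\<lambda>x. f x - g x) \<in> pf"
  using pfa[OF _ pf_neg] by simp

lemma pf_sum: "finite S \<Longrightarrow> (\<And>i. i \<in> S \<Longrightarrow> f i \<in> pf) \<Longrightarrow> (\<lambda>x. \<Sum>i\<in>S. f i x) \<in> pf"
  by (induction S rule: finite_induct) (auto intro: pfc pfa)

lemma pf_prod: "finite S \<Longrightarrow> (\<And>i. i \<in> S \<Longrightarrow> f i \<in> pf) \<Longrightarrow> (\<lambda>x. \<Prod>i\<in>S. f i x) \<in> pf"
  by (induction S rule: finite_induct) (auto intro: pfc pfm)

lemma pf_if: "f \<in> pf \<Longrightarrow> g \<in> pf \<Longrightarrow> (\<lambda>x. if P then f x else g x) \<in> pf"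
  by (cases P) auto

lemma pf_if': "(P \<Longrightarrow> f \<in> pf) \<Longrightarrow> (\<not> P \<Longrightarrow> g \<in> pf) \<Longrightarrow> (\<lambda>x. if P then f x else g x) \<in> pf"
  by (cases P) auto

lemma pf_dep: "f \<in> pf \<Longrightarrow> \<exists>N. \<forall>x y. (\<forall>i<N. x i = y i) \<longrightarrow> f x = f y"
proof (induction rule: pf.induct)
  case (pfv i) then show ?case by (intro exI[of _ "Suc i"]) auto
next
  case (pfa f g)
  then obtain N1 N2 where "\<forall>x y. (\<forall>i<N1. x i = y i) \<longrightarrow> f x = f y"
    "\<forall>x y. (\<forall>i<N2. x i = y i) \<longrightarrow> g x = g y" by blast
  then show ?case by (intro exI[of _ "max N1 N2"]) (metis less_max_iff_disj)
next
  case (pfm f g)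
  then obtain N1 N2 where "\<forall>x y. (\<forall>i<N1. x i = y i) \<longrightarrow> f x = f y"
    "\<forall>x y. (\<forall>i<N2. x i = y i) \<longrightarrow> g x = g y" by blast
  then show ?case by (intro exI[of _ "max N1 N2"]) (metis less_max_iff_disj)
qed auto

lemma pf_univ: "f \<in> pf \<Longrightarrow> \<exists>q. \<forall>t. f (x(i:=t)) = poly q t"
proof (induction rule: pf.induct)
  case (pfc c) then show ?case by (intro exI[of _ "[:c:]"]) auto
next
  case (pfv j) show ?case
  proof (cases "i = j")
    case True then show ?thesis by (intro exI[of _ "[:0,1:]"]) auto
  next
    case False then show ?thesis by (intro exI[of _ "[:x j:]"]) auto
  qed
next
  case (pfa f g) then obtain q1 q2 where "\<forall>t. f (x(i:=t)) = poly q1 t" "\<forall>t. g (x(i:=t)) = poly q2 t" by blast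
  then show ?case by (intro exI[of _ "q1+q2"]) (simp del: fun_upd_apply)
next
  case (pfm f g) then obtain q1 q2 where "\<forall>t. f (x(i:=t)) = poly q1 t" "\<forall>t. g (x(i:=t)) = poly q2 t" by blast
  then show ?case by (intro exI[of _ "q1*q2"]) (simp del: fun_upd_apply)
qed

lemma pf_roots_finite: assumes "f \<in> pf" "f x \<noteq> 0" shows "finite {t. f (x(i:=t)) = 0}"
proof -
  obtain q where q: "\<forall>t. f (x(i:=t)) = poly q t" using pf_univ[OF assms(1)] by blast
  have "poly q (x i) \<noteq> 0" using q[rule_format, of "x i"] assms(2) by simp
  hence "q \<noteq> 0" by auto
  thus ?thesis using poly_roots_finite[of q] q by simp
qed

lemma pf_domain_aux:
  assumes "finite S" "f \<in> pf" "g \<in> pf"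
  shows "f x \<noteq> 0 \<Longrightarrow> g y \<noteq> 0 \<Longrightarrow> (\<forall>i. i \<notin> S \<longrightarrow> x i = y i) \<Longrightarrow> \<exists>z. f z \<noteq> 0 \<and> g z \<noteq> 0"
  using assms(1)
proof (induction S arbitrary: x y rule: finite_induct)
  case empty
  then have "x = y" by auto
  then show ?case using empty by auto
next
  case (insert i S)
  have fin: "finite ({t. f (x(i:=t)) = 0} \<union> {t. g (y(i:=t)) = 0})"
    using pf_roots_finite[OF assms(2) insert.prems(1), of i] pf_roots_finite[OF assms(3) insert.prems(2), of i] by blast
  obtain t where t: "t \<notin> {t. f (x(i:=t)) = 0} \<union> {t. g (y(i:=t)) = 0}"
    using ex_new_if_finite[OF infinite_UNIV_char_0 fin] by blast
  have a: "f (x(i:=t)) \<noteq> 0" "g (y(i:=t)) \<noteq> 0" using t by blast+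
  have b: "\<forall>j. j \<notin> S \<longrightarrow> (x(i:=t)) j = (y(i:=t)) j" using insert.prems(3) by auto
  show ?case using insert.IH[OF a b] .
qed

lemma pf_domain:
  assumes "f \<in> pf" "g \<in> pf" "f x \<noteq> 0" "g y \<noteq> 0"
  shows "\<exists>z. f z \<noteq> 0 \<and> g z \<noteq> 0"
proof -
  obtain N where N: "\<forall>x y. (\<forall>i<N. x i = y i) \<longrightarrow> f x = f y" using pf_dep[OF assms(1)] by blast
  define x' where "x' = (\<lambda>i. if i < N then x i else y i)"
  have "f x' = f x" using N unfolding x'_def by auto
  show ?thesis
    by (rule pf_domain_aux[of "{..<N}" f g x' y]) (use assms \<open>f x' = f x\<close> in \<open>auto simp: x'_def\<close>)
qed

definition pfmat :: "nat \<Rightarrow> nat \<Rightarrow> ((nat \<Rightarrow> complex) \<Rightarrow> complex mat) \<Rightarrow> bool" where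
  "pfmat k l M \<longleftrightarrow> (\<forall>x. M x \<in> carrier_mat k l) \<and> (\<forall>i<k. \<forall>j<l. (\<lambda>x. M x $$ (i,j)) \<in> pf)"

lemma pfmat_mat: "(\<And>i j. i < k \<Longrightarrow> j < l \<Longrightarrow> e i j \<in> pf) \<Longrightarrow> pfmat k l (\<lambda>x. mat k l (\<lambda>(i,j). e i j x))"
  unfolding pfmat_def by auto

lemma pfmat_const: "C \<in> carrier_mat k l \<Longrightarrow> pfmat k l (\<lambda>_. C)"
  unfolding pfmat_def by (auto intro: pfc)

lemma pfmat_carrier: "pfmat k l M \<Longrightarrow> M x \<in> carrier_mat k l"
  unfolding pfmat_def by auto

lemma pfmat_entry: "pfmat k l M \<Longrightarrow> i < k \<Longrightarrow> j < l \<Longrightarrow> (\<lambda>x. M x $$ (i,j)) \<in> pf"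
  unfolding pfmat_def by auto

lemma pfmat_mult: assumes "pfmat k l M" "pfmat l q N" shows "pfmat k q (\<lambda>x. M x * N x)"
proof -
  have c: "M x \<in> carrier_mat k l" "N x \<in> carrier_mat l q" for x using assms pfmat_carrier by blast+
  have d[simp]: "dim_row (M x) = k" "dim_col (M x) = l" "dim_row (N x) = l" "dim_col (N x) = q" for x
    using c[of x] unfolding carrier_mat_def by auto
  have "(\<lambda>x. (M x * N x) $$ (i,j)) \<in> pf" if "i < k" "j < q" for i j
  proof -
    have "(\<lambda>x. (M x * N x) $$ (i,j)) = (\<lambda>x. \<Sum>t\<in>{0..<l}. M x $$ (i,t) * N x $$ (t,j))"
      by (rule ext) (use c that in \<open>auto simp: scalar_prod_def\<close>)
    also have "\<dots> \<in> pf" using that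
      by (intro pf_sum pfm) (auto intro: pfmat_entry[OF assms(1)] pfmat_entry[OF assms(2)])
    finally show ?thesis .
  qed
  then show ?thesis using c unfolding pfmat_def by auto
qed

lemma pf_det: assumes "pfmat k k M" shows "(\<lambda>x. det (M x)) \<in> pf"
proof -
  have c: "M x \<in> carrier_mat k k" for x using assms pfmat_carrier by blast
  have "(\<lambda>x. det (M x)) = (\<lambda>x. \<Sum>p\<in>{p. p permutes {0..<k}}. signof p * (\<Prod>i = 0..<k. M x $$ (i, p i)))"
    using det_def'[OF c] by auto
  also have "\<dots> \<in> pf"
  proof (intro pf_sum pfm pfc pf_prod)
    show "finite {p. p permutes {0..<k}}" by (simp add: finite_permutations)
    fix p i assume "p \<in> {p. p permutes {0..<k}}" "i \<in> {0..<k}"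
    then show "(\<lambda>x. M x $$ (i, p i)) \<in> pf"
      by (intro pfmat_entry[OF assms]) (auto simp: permutes_in_image)
  qed auto
  finally show ?thesis .
qed

lemma pfmat_adj: assumes "pfmat k k M" shows "pfmat k k (\<lambda>x. adj_mat (M x))"
proof -
  have c: "M x \<in> carrier_mat k k" for x using assms pfmat_carrier by blast
  have d[simp]: "dim_row (M x) = k" "dim_col (M x) = k" for x
    using c[of x] unfolding carrier_mat_def by auto
  have del: "pfmat (k-1) (k-1) (\<lambda>x. mat_delete (M x) j i)" for i j
  proof -
    have eq: "(\<lambda>x. mat_delete (M x) j i) = (\<lambda>x. mat (k-1) (k-1) (\<lambda>(i',j').
      M x $$ (if i' < j then i' else Suc i', if j' < i then j' else Suc j')))"
      unfolding mat_delete_def by (rule ext) (use c in auto)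
    show ?thesis unfolding eq
      by (intro pfmat_mat pfmat_entry[OF assms]) auto
  qed
  have eq: "(\<lambda>x. adj_mat (M x)) = (\<lambda>x. mat k k (\<lambda>(i,j). (-1)^(j+i) * det (mat_delete (M x) j i)))"
    unfolding adj_mat_def cofactor_def by (rule ext) (use c in auto)
  show ?thesis unfolding eq
    by (intro pfmat_mat pfm pfc pf_det[OF del])
qed

lemma pfmat_four_block:
  assumes "pfmat s s A" "pfmat s r B" "pfmat r s C" "pfmat r r D"
  shows "pfmat (s+r) (s+r) (\<lambda>x. four_block_mat (A x) (B x) (C x) (D x))"
proof -
  have c: "A x \<in> carrier_mat s s" "B x \<in> carrier_mat s r" "C x \<in> carrier_mat r s" "D x \<in> carrier_mat r r" for x
    using assms pfmat_carrier by blast+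
  have d[simp]: "dim_row (A x) = s" "dim_col (A x) = s" "dim_row (D x) = r" "dim_col (D x) = r" for x
    using c[of x] unfolding carrier_mat_def by auto
  have "(\<lambda>x. four_block_mat (A x) (B x) (C x) (D x) $$ (i,j)) \<in> pf" if "i < s+r" "j < s+r" for i j
  proof -
    have "(\<lambda>x. four_block_mat (A x) (B x) (C x) (D x) $$ (i,j)) = (\<lambda>x. if i < s then
      if j < s then A x $$ (i,j) else B x $$ (i,j - s)
      else if j < s then C x $$ (i - s, j) else D x $$ (i - s, j - s))"
      by (rule ext) (use c that in auto)
    also have "\<dots> \<in> pf" using that
      by (intro pf_if' pfmat_entry[OF assms(1)] pfmat_entry[OF assms(2)] pfmat_entry[OF assms(3)] pfmat_entry[OF assms(4)]) auto
    finally show ?thesis .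
  qed
  then show ?thesis using c unfolding pfmat_def by (auto intro!: four_block_carrier_mat)
qed

lemma pf_pullback:
  assumes "f \<in> poly_fun n" "pfmat n n M1" "pfmat n n M2"
  shows "(\<lambda>x. f (M1 x, M2 x)) \<in> pf"
  using assms(1)
proof (induction rule: poly_fun.induct)
  case (pf_const c) then show ?case by (rule pfc)
next
  case (pf_fst i j) then show ?case using pfmat_entry[OF assms(2)] by auto
next
  case (pf_snd i j) then show ?case using pfmat_entry[OF assms(3)] by auto
next
  case (pf_add f g) then show ?case using pfa by blast
next
  case (pf_mult f g) then show ?case using pfm by blast
qed

lemma GL_det: assumes "GL_inv n g h" shows "det g * det h = 1" "det g \<noteq> 0"
proof -
  have c: "g \<in> carrier_mat n n" "h \<in> carrier_mat n n" "g * h = 1\<^sub>m n" using assms unfolding GL_inv_def by auto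
  have "det g * det h = 1" using det_mult[OF c(1) c(2)] c(3) by simp
  then show "det g * det h = 1" "det g \<noteq> 0" by auto
qed

lemma GL_adj: assumes "GL_inv n g h" shows "adj_mat g = det g \<cdot>\<^sub>m h"
proof -
  have c: "g \<in> carrier_mat n n" "h \<in> carrier_mat n n" "g * h = 1\<^sub>m n" using assms unfolding GL_inv_def by auto
  have a: "adj_mat g \<in> carrier_mat n n" "adj_mat g * g = det g \<cdot>\<^sub>m 1\<^sub>m n" using adj_mat[OF c(1)] by auto
  have "adj_mat g = adj_mat g * (g * h)" using c a by simp
  also have "\<dots> = (adj_mat g * g) * h" using assoc_mult_mat[OF a(1) c(1) c(2)] by simp
  also have "\<dots> = det g \<cdot>\<^sub>m h" unfolding a(2) using mult_smult_assoc_mat[OF one_carrier_mat c(2)] c by simp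
  finally show ?thesis .
qed

lemma GL_scale: assumes "GL_inv n g h" "M \<in> carrier_mat n n"
  shows "g * M * adj_mat g = g * (det g \<cdot>\<^sub>m M) * h"
proof -
  have c: "g \<in> carrier_mat n n" "h \<in> carrier_mat n n" using assms unfolding GL_inv_def by auto
  show ?thesis unfolding GL_adj[OF assms(1)] using c assms(2)
    by (simp add: mult_smult_distrib[of _ n n] mult_smult_assoc_mat[of _ n n])
qed

lemma GL_of_det: assumes "g \<in> carrier_mat n n" "det g \<noteq> 0"
  shows "GL_inv n g ((1 / det g) \<cdot>\<^sub>m adj_mat g)"
proof -
  have a: "adj_mat g \<in> carrier_mat n n" "g * adj_mat g = det g \<cdot>\<^sub>m 1\<^sub>m n" "adj_mat g * g = det g \<cdot>\<^sub>m 1\<^sub>m n"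
    using adj_mat[OF assms(1)] by auto
  show ?thesis unfolding GL_inv_def using assms a
    by (auto simp: mult_smult_distrib[of _ n n] mult_smult_assoc_mat[of _ n n])
qed

lemma GL_mult: assumes "GL_inv n g h" "GL_inv n g' h'" shows "GL_inv n (g * g') (h' * h)"
proof -
  have c: "g \<in> carrier_mat n n" "h \<in> carrier_mat n n" "g * h = 1\<^sub>m n" "h * g = 1\<^sub>m n"
    "g' \<in> carrier_mat n n" "h' \<in> carrier_mat n n" "g' * h' = 1\<^sub>m n" "h' * g' = 1\<^sub>m n"
    using assms unfolding GL_inv_def by auto
  have "g' * (h' * h) = (g' * h') * h" using assoc_mult_mat[OF c(5) c(6) c(2)] by simp
  also have "\<dots> = h" using c by simp
  finally have "g * g' * (h' * h) = g * h" using assoc_mult_mat[OF c(1) c(5) mult_carrier_mat[OF c(6) c(2)]] by simp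
  then have 1: "g * g' * (h' * h) = 1\<^sub>m n" using c by simp
  have "h * (g * g') = (h * g) * g'" using assoc_mult_mat[OF c(2) c(1) c(5)] by simp
  also have "\<dots> = g'" using c by simp
  finally have "h' * h * (g * g') = h' * g'" using assoc_mult_mat[OF c(6) c(2) mult_carrier_mat[OF c(1) c(5)]] by simp
  then have 2: "h' * h * (g * g') = 1\<^sub>m n" using c by simp
  show ?thesis unfolding GL_inv_def using c 1 2 by auto
qed

definition dval :: "nat \<Rightarrow> nat \<Rightarrow> (nat \<Rightarrow> complex) \<Rightarrow> nat \<Rightarrow> complex" where
  "dval p m a i = (if i < 2*p then (if even i then a (i div 2) else - a (i div 2))
     else if i < 2*p+m then a (i - p) else 0)"

lemma concat_pairs_nth: "i < 2*p \<Longrightarrow>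
  concat (map (\<lambda>i. [a i, - a i]) [0..<p]) ! i = (if even i then a (i div 2) else - a (i div 2))"
proof (induction p arbitrary: i)
  case 0 then show ?case by simp
next
  case (Suc p)
  have len: "length (concat (map (\<lambda>i. [a i, - a i]) [0..<p])) = 2*p"
    by (induction p) auto
  show ?case
  proof (cases "i < 2*p")
    case True then show ?thesis using Suc by (simp add: nth_append len)
  next
    case False
    then have "i = 2*p \<or> i = 2*p+1" using Suc.prems by auto
    then show ?thesis by (auto simp: nth_append len)
  qed
qed

lemma concat_pairs_len: "length (concat (map (\<lambda>i. [a i, - a i]) [0..<p])) = 2*p"
  by (induction p) auto

lemma diag_entries_nth: "i < 2*p+m+r \<Longrightarrow> diag_entries p m r a ! i = dval p m a i"
  unfolding diag_entries_def dval_def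
  by (auto simp: nth_append concat_pairs_len concat_pairs_nth)

lemma A_mat_alt: "A_mat p m r a = mat (2*p+m+r) (2*p+m+r) (\<lambda>(i,j). if i = j then dval p m a i else 0)"
  unfolding A_mat_def Let_def by (rule eq_matI) (simp_all add: diag_entries_nth)

lemma A_mat_carrier[simp]: "A_mat p m r a \<in> carrier_mat (2*p+m+r) (2*p+m+r)"
  unfolding A_mat_def Let_def by auto

lemma B_mat_carrier[simp]: "B_mat p m r b c \<in> carrier_mat (2*p+m+r) (2*p+m+r)"
  unfolding B_mat_def Let_def by auto

lemma A_mat_dim[simp]: "dim_row (A_mat p m r a) = 2*p+m+r" "dim_col (A_mat p m r a) = 2*p+m+r"
  unfolding A_mat_def Let_def by auto

lemma B_mat_dim[simp]: "dim_row (B_mat p m r b c) = 2*p+m+r" "dim_col (B_mat p m r b c) = 2*p+m+r"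
  unfolding B_mat_def Let_def by auto

lemma A_mat_index: "i < 2*p+m+r \<Longrightarrow> j < 2*p+m+r \<Longrightarrow> A_mat p m r a $$ (i,j) = (if i = j then dval p m a i else 0)"
  unfolding A_mat_alt by auto

lemma A_mat_smult: "A_mat p m r (\<lambda>k. d * a k) = d \<cdot>\<^sub>m A_mat p m r a"
  unfolding A_mat_alt by (rule eq_matI) (simp_all add: dval_def)

lemma B_mat_index: "i < 2*p+m+r \<Longrightarrow> j < 2*p+m+r \<Longrightarrow> B_mat p m r b c $$ (i,j) =
       (if i < 2*p \<and> j < 2*p \<and> i div 2 = j div 2 \<and> even i \<and> j = i + 1 then b (i div 2)
       else if i < 2*p \<and> j < 2*p \<and> i div 2 = j div 2 \<and> odd i \<and> i = j + 1 then c (i div 2)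
       else if 2*p+m \<le> i \<and> i = j then b (p + (i - (2*p+m)))
       else 0)"
  unfolding B_mat_def Let_def by simp

lemma B_mat_smult: "B_mat p m r (\<lambda>k. d * b k) (\<lambda>k. d * c k) = d \<cdot>\<^sub>m B_mat p m r b c"
proof (rule eq_matI)
  fix i j assume ij: "i < dim_row (d \<cdot>\<^sub>m B_mat p m r b c)" "j < dim_col (d \<cdot>\<^sub>m B_mat p m r b c)"
  then have ij': "i < 2*p+m+r" "j < 2*p+m+r" by simp_all
  show "B_mat p m r (\<lambda>k. d * b k) (\<lambda>k. d * c k) $$ (i,j) = (d \<cdot>\<^sub>m B_mat p m r b c) $$ (i,j)"
    using ij' by (simp only: index_smult_mat(1) B_mat_dim B_mat_index if_distrib[where f="(*) d"] mult_zero_right)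
qed simp_all

lemma diag_mult_left: assumes "D \<in> carrier_mat n n" "\<And>i j. i < n \<Longrightarrow> j < n \<Longrightarrow> D $$ (i,j) = (if i = j then d i else 0)"
  "B \<in> carrier_mat n n" "i < n" "j < n"
  shows "(D * B) $$ (i,j) = d i * B $$ (i,j)"
proof -
  have "(D * B) $$ (i,j) = (\<Sum>t\<in>{0..<n}. D $$ (i,t) * B $$ (t,j))"
    using assms by (auto simp: scalar_prod_def)
  also have "\<dots> = (\<Sum>t\<in>{0..<n}. if t = i then d i * B $$ (i,j) else 0)"
    by (rule sum.cong) (use assms in auto)
  also have "\<dots> = d i * B $$ (i,j)" using assms(4) by simp
  finally show ?thesis .
qed

lemma diag_mult_right: assumes "D \<in> carrier_mat n n" "\<And>i j. i < n \<Longrightarrow> j < n \<Longrightarrow> D $$ (i,j) = (if i = j then d i else 0)"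
  "B \<in> carrier_mat n n" "i < n" "j < n"
  shows "(B * D) $$ (i,j) = B $$ (i,j) * d j"
proof -
  have "(B * D) $$ (i,j) = (\<Sum>t\<in>{0..<n}. B $$ (i,t) * D $$ (t,j))"
    using assms by (auto simp: scalar_prod_def)
  also have "\<dots> = (\<Sum>t\<in>{0..<n}. if t = j then B $$ (i,j) * d j else 0)"
    by (rule sum.cong) (use assms in auto)
  also have "\<dots> = B $$ (i,j) * d j" using assms(5) by (simp add: assms)
  finally show ?thesis .
qed

lemma anticomm_entry: assumes "n = 2*p+m+r" "B \<in> carrier_mat n n"
  shows "(A_mat p m r a * B + B * A_mat p m r a = 0\<^sub>m n n) \<longleftrightarrow>
    (\<forall>i<n. \<forall>j<n. (dval p m a i + dval p m a j) * B $$ (i,j) = 0)"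
proof -
  have A: "A_mat p m r a \<in> carrier_mat n n" using assms by simp
  have e: "(A_mat p m r a * B + B * A_mat p m r a) $$ (i,j) = (dval p m a i + dval p m a j) * B $$ (i,j)"
    if "i < n" "j < n" for i j
    using diag_mult_left[OF A _ assms(2) that, of "dval p m a"] diag_mult_right[OF A _ assms(2) that, of "dval p m a"]
      that A assms by (auto simp: A_mat_index algebra_simps)
  show ?thesis
  proof
    assume "A_mat p m r a * B + B * A_mat p m r a = 0\<^sub>m n n"
    then show "\<forall>i<n. \<forall>j<n. (dval p m a i + dval p m a j) * B $$ (i,j) = 0" using e by (metis index_zero_mat(1))
  next
    assume h: "\<forall>i<n. \<forall>j<n. (dval p m a i + dval p m a j) * B $$ (i,j) = 0"
    show "A_mat p m r a * B + B * A_mat p m r a = 0\<^sub>m n n"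
      by (rule eq_matI) (use e h A assms(2) in auto)
  qed
qed

lemma AB_anticomm: "(A_mat p m r a, B_mat p m r b c) \<in> anticomm_var (2*p+m+r)"
proof -
  let ?n = "2*p+m+r"
  have "(dval p m a i + dval p m a j) * B_mat p m r b c $$ (i,j) = 0" if "i < ?n" "j < ?n" for i j
  proof (cases "i < 2*p \<and> j < 2*p \<and> i div 2 = j div 2 \<and> even i \<and> j = i + 1")
    case True
    then have h: "i < 2*p" "j < 2*p" "i div 2 = j div 2" "even i" "j = i+1" by blast+
    have "odd j" using h(4,5) by simp
    have "dval p m a i = a (i div 2)" using h(1,4) by (simp add: dval_def)
    moreover have "dval p m a j = - a (i div 2)" using h(2) h(3)[symmetric] \<open>odd j\<close> by (simp add: dval_def)
    ultimately show ?thesis by simp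
  next
    case F1: False
    show ?thesis
    proof (cases "i < 2*p \<and> j < 2*p \<and> i div 2 = j div 2 \<and> odd i \<and> i = j + 1")
      case True
      then have h: "i < 2*p" "j < 2*p" "i div 2 = j div 2" "odd i" "i = j+1" by blast+
      have "even j" using h(4,5) by simp
      have "dval p m a i = - a (i div 2)" using h(1,4) by (simp add: dval_def)
      moreover have "dval p m a j = a (i div 2)" using h(2) h(3)[symmetric] \<open>even j\<close> by (simp add: dval_def)
      ultimately show ?thesis by simp
    next
      case F2: False
      show ?thesis
      proof (cases "2*p+m \<le> i \<and> i = j")
        case True then have "dval p m a i = 0" "dval p m a j = 0" unfolding dval_def by auto
        then have "dval p m a i + dval p m a j = 0" by simp
        then show ?thesis by simp
      next
        case False
        have "B_mat p m r b c $$ (i,j) = 0"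
          by (simp only: B_mat_index[OF that] F1 F2 False if_False)
        then show ?thesis by simp
      qed
    qed
  qed
  then have "\<forall>i<?n. \<forall>j<?n. (dval p m a i + dval p m a j) * B_mat p m r b c $$ (i,j) = 0" by blast
  then have "A_mat p m r a * B_mat p m r b c + B_mat p m r b c * A_mat p m r a = 0\<^sub>m ?n ?n"
    using anticomm_entry[of ?n p m r "B_mat p m r b c" a] by simp
  then show ?thesis unfolding anticomm_var_def by simp
qed

definition enc :: "nat \<Rightarrow> nat \<Rightarrow> nat \<Rightarrow> nat" where
  "enc t i j = prod_encode (t, prod_encode (i,j))"

definition gx :: "nat \<Rightarrow> (nat \<Rightarrow> complex) \<Rightarrow> complex mat" where
  "gx n x = mat n n (\<lambda>(i,j). x (enc 0 i j))"
definition ax :: "(nat \<Rightarrow> complex) \<Rightarrow> nat \<Rightarrow> complex" where "ax x k = x (enc 1 k 0)"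
definition bx :: "(nat \<Rightarrow> complex) \<Rightarrow> nat \<Rightarrow> complex" where "bx x k = x (enc 2 k 0)"
definition cx :: "(nat \<Rightarrow> complex) \<Rightarrow> nat \<Rightarrow> complex" where "cx x k = x (enc 3 k 0)"
definition tx :: "nat \<Rightarrow> (nat \<Rightarrow> complex) \<Rightarrow> complex mat" where
  "tx r x = mat r r (\<lambda>(i,j). if i \<le> j then x (enc 4 i j) else 0)"

definition mk :: "complex mat \<Rightarrow> (nat \<Rightarrow> complex) \<Rightarrow> (nat \<Rightarrow> complex) \<Rightarrow> (nat \<Rightarrow> complex) \<Rightarrow> complex mat \<Rightarrow> nat \<Rightarrow> complex" where
  "mk g a b c T v = (case prod_decode v of (t, w) \<Rightarrow> case prod_decode w of (i,j) \<Rightarrow>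
     if t = 0 then g $$ (i,j) else if t = 1 then a i else if t = 2 then b i else if t = 3 then c i else T $$ (i,j))"

lemma mk_simps: "ax (mk g a b c T) = a" "bx (mk g a b c T) = b" "cx (mk g a b c T) = c"
  unfolding ax_def bx_def cx_def mk_def enc_def by auto

lemma mk_gx: "g \<in> carrier_mat n n \<Longrightarrow> gx n (mk g a b c T) = g"
  unfolding gx_def mk_def enc_def by (rule eq_matI) auto

lemma mk_tx: "T \<in> carrier_mat r r \<Longrightarrow> (\<And>i j. j < i \<Longrightarrow> i < r \<Longrightarrow> T $$ (i,j) = 0) \<Longrightarrow> tx r (mk g a b c T) = T"
  unfolding tx_def mk_def enc_def by (rule eq_matI) auto

lemma gx_carrier[simp]: "gx n x \<in> carrier_mat n n" unfolding gx_def by auto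
lemma tx_carrier[simp]: "tx r x \<in> carrier_mat r r" unfolding tx_def by auto

lemma pfmat_gx: "pfmat n n (gx n)"
  unfolding gx_def by (rule pfmat_mat) (rule pfv)

lemma pfmat_tx: "pfmat r r (tx r)"
  unfolding tx_def by (rule pfmat_mat) (intro pf_if pfv pfc)

lemma pf_dval: "(\<lambda>x. dval p m (ax x) i) \<in> pf"
  unfolding dval_def ax_def by (intro pf_if pf_neg pfv pfc)

lemma pfmat_A: "pfmat (2*p+m+r) (2*p+m+r) (\<lambda>x. A_mat p m r (ax x))"
  unfolding A_mat_alt by (rule pfmat_mat) (intro pf_if pf_dval pfc)

lemma pfmat_B: "pfmat (2*p+m+r) (2*p+m+r) (\<lambda>x. B_mat p m r (bx x) (cx x))"
  unfolding B_mat_def Let_def bx_def cx_def by (rule pfmat_mat) (intro pf_if pfv pfc)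

lemma closure_sup: "S \<subseteq> zariski_closure n S"
  unfolding zariski_closure_def by auto

lemma closure_lower: "zariski_closed n T \<Longrightarrow> S \<subseteq> T \<Longrightarrow> zariski_closure n S \<subseteq> T"
  unfolding zariski_closure_def by auto

lemma closure_mono2: assumes "S \<subseteq> zariski_closure n S'" shows "zariski_closure n S \<subseteq> zariski_closure n S'"
proof -
  have "zariski_closure n S \<subseteq> T" if "zariski_closed n T" "S' \<subseteq> T" for T
  proof -
    have "zariski_closure n S' \<subseteq> T" using closure_lower[OF that] .
    then show ?thesis using closure_lower[OF that(1)] assms by blast
  qed
  then show ?thesis unfolding zariski_closure_def[of n S'] by blast
qed

lemma in_closureI:
  assumes "s \<in> pair_space n" "\<And>f. f \<in> poly_fun n \<Longrightarrow> (\<forall>t\<in>S. f t = 0) \<Longrightarrow> f s = 0"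
  shows "s \<in> zariski_closure n S"
  unfolding zariski_closure_def
proof (rule InterI)
  fix T assume "T \<in> {T. zariski_closed n T \<and> S \<subseteq> T}"
  then obtain F where F: "F \<subseteq> poly_fun n" "T = {X \<in> pair_space n. \<forall>f\<in>F. f X = 0}" "S \<subseteq> T"
    unfolding zariski_closed_def by auto
  have "f s = 0" if "f \<in> F" for f
    using assms(2)[of f] F that by auto
  then show "s \<in> T" using F assms(1) by auto
qed

lemma vanish_param:
  assumes "f \<in> poly_fun n" "pfmat n n M1" "pfmat n n M2" "w \<in> pf" "w x0 \<noteq> 0"
    "\<And>x. w x \<noteq> 0 \<Longrightarrow> f (M1 x, M2 x) = 0"
  shows "f (M1 x, M2 x) = 0"
proof (rule ccontr)
  assume "f (M1 x, M2 x) \<noteq> 0"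
  then obtain z where "w z \<noteq> 0" "f (M1 z, M2 z) \<noteq> 0"
    using pf_domain[OF assms(4) pf_pullback[OF assms(1-3)] assms(5)] by blast
  then show False using assms(6) by blast
qed

lemma irr_param:
  assumes "S \<subseteq> pair_space n" "S \<noteq> {}" "pfmat n n M1" "pfmat n n M2" "w \<in> pf"
    "\<And>x. w x \<noteq> 0 \<Longrightarrow> (M1 x, M2 x) \<in> S"
    "\<And>s. s \<in> S \<Longrightarrow> \<exists>x. w x \<noteq> 0 \<and> s = (M1 x, M2 x)"
  shows "zariski_irreducible n (zariski_closure n S)"
  unfolding zariski_irreducible_def
proof (intro conjI allI impI)
  show "zariski_closure n S \<noteq> {}" using closure_sup[of S n] assms(2) by auto
  fix C1 C2 assume c1: "zariski_closed n C1" and c2: "zariski_closed n C2"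
    and cov: "zariski_closure n S \<subseteq> C1 \<union> C2"
  then have cov': "S \<subseteq> C1 \<union> C2" using closure_sup[of S n] by auto
  obtain F1 where F1: "F1 \<subseteq> poly_fun n" "C1 = {X \<in> pair_space n. \<forall>f\<in>F1. f X = 0}"
    using c1 unfolding zariski_closed_def by auto
  obtain F2 where F2: "F2 \<subseteq> poly_fun n" "C2 = {X \<in> pair_space n. \<forall>f\<in>F2. f X = 0}"
    using c2 unfolding zariski_closed_def by auto
  have "S \<subseteq> C1 \<or> S \<subseteq> C2"
  proof (rule ccontr)
    assume "\<not> (S \<subseteq> C1 \<or> S \<subseteq> C2)"
    then obtain s1 s2 where s: "s1 \<in> S" "s1 \<notin> C1" "s2 \<in> S" "s2 \<notin> C2" by auto
    obtain f1 where f1: "f1 \<in> F1" "f1 s1 \<noteq> 0" using s assms(1) F1 by auto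
    obtain f2 where f2: "f2 \<in> F2" "f2 s2 \<noteq> 0" using s assms(1) F2 by auto
    obtain x1 where x1: "w x1 \<noteq> 0" "s1 = (M1 x1, M2 x1)" using assms(7) s by blast
    obtain x2 where x2: "w x2 \<noteq> 0" "s2 = (M1 x2, M2 x2)" using assms(7) s by blast
    have u1: "(\<lambda>x. f1 (M1 x, M2 x) * w x) \<in> pf"
      using pfm[OF pf_pullback[OF _ assms(3,4)] assms(5)] f1 F1 by auto
    have u2: "(\<lambda>x. f2 (M1 x, M2 x) * w x) \<in> pf"
      using pfm[OF pf_pullback[OF _ assms(3,4)] assms(5)] f2 F2 by auto
    obtain z where z: "f1 (M1 z, M2 z) * w z \<noteq> 0" "f2 (M1 z, M2 z) * w z \<noteq> 0"
      using pf_domain[OF u1 u2, of x1 x2] x1 x2 f1 f2 by auto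
    then have "(M1 z, M2 z) \<in> S" using assms(6) by auto
    then have "(M1 z, M2 z) \<in> C1 \<union> C2" using cov' by auto
    then show False using z f1 f2 F1 F2 by auto
  qed
  then show "zariski_closure n S \<subseteq> C1 \<or> zariski_closure n S \<subseteq> C2"
    using closure_lower c1 c2 by blast
qed

definition M1 :: "nat \<Rightarrow> nat \<Rightarrow> nat \<Rightarrow> (nat \<Rightarrow> complex) \<Rightarrow> complex mat" where
  "M1 p m r x = gx (2*p+m+r) x * A_mat p m r (ax x) * adj_mat (gx (2*p+m+r) x)"
definition M2 :: "nat \<Rightarrow> nat \<Rightarrow> nat \<Rightarrow> (nat \<Rightarrow> complex) \<Rightarrow> complex mat" where
  "M2 p m r x = gx (2*p+m+r) x * B_mat p m r (bx x) (cx x) * adj_mat (gx (2*p+m+r) x)"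

lemma pfmat_M1: "pfmat (2*p+m+r) (2*p+m+r) (M1 p m r)"
  unfolding M1_def by (rule pfmat_mult[OF pfmat_mult[OF pfmat_gx pfmat_A] pfmat_adj[OF pfmat_gx]])

lemma pfmat_M2: "pfmat (2*p+m+r) (2*p+m+r) (M2 p m r)"
  unfolding M2_def by (rule pfmat_mult[OF pfmat_mult[OF pfmat_gx pfmat_B] pfmat_adj[OF pfmat_gx]])

lemma Psi_scaled:
  assumes "det (gx (2*p+m+r) x) \<noteq> 0"
  shows "GL_inv (2*p+m+r) (gx (2*p+m+r) x) ((1 / det (gx (2*p+m+r) x)) \<cdot>\<^sub>m adj_mat (gx (2*p+m+r) x))"
    "M1 p m r x = gx (2*p+m+r) x * A_mat p m r (\<lambda>k. det (gx (2*p+m+r) x) * ax x k) * ((1 / det (gx (2*p+m+r) x)) \<cdot>\<^sub>m adj_mat (gx (2*p+m+r) x))"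
    "M2 p m r x = gx (2*p+m+r) x * B_mat p m r (\<lambda>k. det (gx (2*p+m+r) x) * bx x k) (\<lambda>k. det (gx (2*p+m+r) x) * cx x k) * ((1 / det (gx (2*p+m+r) x)) \<cdot>\<^sub>m adj_mat (gx (2*p+m+r) x))"
proof -
  show gl: "GL_inv (2*p+m+r) (gx (2*p+m+r) x) ((1 / det (gx (2*p+m+r) x)) \<cdot>\<^sub>m adj_mat (gx (2*p+m+r) x))"
    by (rule GL_of_det) (use assms in auto)
  show "M1 p m r x = gx (2*p+m+r) x * A_mat p m r (\<lambda>k. det (gx (2*p+m+r) x) * ax x k) * ((1 / det (gx (2*p+m+r) x)) \<cdot>\<^sub>m adj_mat (gx (2*p+m+r) x))"
    unfolding M1_def GL_scale[OF gl A_mat_carrier] A_mat_smult ..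
  show "M2 p m r x = gx (2*p+m+r) x * B_mat p m r (\<lambda>k. det (gx (2*p+m+r) x) * bx x k) (\<lambda>k. det (gx (2*p+m+r) x) * cx x k) * ((1 / det (gx (2*p+m+r) x)) \<cdot>\<^sub>m adj_mat (gx (2*p+m+r) x))"
    unfolding M2_def GL_scale[OF gl B_mat_carrier] B_mat_smult ..
qed

lemma Psi_in_Im: assumes "det (gx (2*p+m+r) x) \<noteq> 0" shows "(M1 p m r x, M2 p m r x) \<in> phi_image p m r"
  unfolding phi_image_def Let_def using Psi_scaled[OF assms] by blast

lemma Im_Psi: assumes "s \<in> phi_image p m r"
  shows "\<exists>x. det (gx (2*p+m+r) x) \<noteq> 0 \<and> s = (M1 p m r x, M2 p m r x)"
proof -
  let ?n = "2*p+m+r"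
  obtain g h a b c where s: "s = (g * A_mat p m r a * h, g * B_mat p m r b c * h)" and gl: "GL_inv ?n g h"
    using assms unfolding phi_image_def Let_def by blast
  have gc: "g \<in> carrier_mat ?n ?n" using gl unfolding GL_inv_def by auto
  define d where "d = det g"
  have d0: "d \<noteq> 0" using GL_det[OF gl] d_def by auto
  define x where "x = mk g (\<lambda>k. a k / d) (\<lambda>k. b k / d) (\<lambda>k. c k / d) (0\<^sub>m 0 0)"
  have gx: "gx ?n x = g" unfolding x_def using mk_gx[OF gc] by blast
  have e1: "(\<lambda>k. d * (a k / d)) = a" "(\<lambda>k. d * (b k / d)) = b" "(\<lambda>k. d * (c k / d)) = c" using d0 by auto
  have "M1 p m r x = g * A_mat p m r a * h"
    unfolding M1_def gx GL_scale[OF gl A_mat_carrier] d_def[symmetric] A_mat_smult[symmetric]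
    unfolding x_def mk_simps e1 ..
  moreover have "M2 p m r x = g * B_mat p m r b c * h"
    unfolding M2_def gx GL_scale[OF gl B_mat_carrier] d_def[symmetric] B_mat_smult[symmetric]
    unfolding x_def mk_simps e1 ..
  ultimately show ?thesis using s gx d0 d_def by auto
qed

lemma Im_pair_space: "phi_image p m r \<subseteq> pair_space (2*p+m+r)"
  unfolding phi_image_def Let_def pair_space_def GL_inv_def by auto

lemma Im_nonempty: "phi_image p m r \<noteq> {}"
proof -
  have "GL_inv (2*p+m+r) (1\<^sub>m (2*p+m+r)) (1\<^sub>m (2*p+m+r))" unfolding GL_inv_def by auto
  then show ?thesis unfolding phi_image_def Let_def by blast
qed

theorem irreducible_closure_Im: "zariski_irreducible (2*p+m+r) (zariski_closure (2*p+m+r) (phi_image p m r))"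
proof (rule irr_param[OF Im_pair_space Im_nonempty pfmat_M1 pfmat_M2 pf_det[OF pfmat_gx]])
  fix x assume "det (gx (2*p+m+r) x) \<noteq> 0"
  then show "(M1 p m r x, M2 p m r x) \<in> phi_image p m r" by (rule Psi_in_Im)
next
  fix s assume "s \<in> phi_image p m r"
  then show "\<exists>x. det (gx (2*p+m+r) x) \<noteq> 0 \<and> s = (M1 p m r x, M2 p m r x)" by (rule Im_Psi)
qed

definition Gset :: "nat \<Rightarrow> nat \<Rightarrow> nat \<Rightarrow> cpair set" where
  "Gset p m r = {(g * A_mat p m r a * h, g * B * h) | g h a B.
        GL_inv (2*p+m+r) g h \<and> generic_params p m a \<and> (A_mat p m r a, B) \<in> anticomm_var (2*p+m+r)}"

lemma Z_pmr_Gset: "Z_pmr p m r = zariski_closure (2*p+m+r) (Gset p m r)"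
  unfolding Z_pmr_def Gset_def Let_def ..

definition Dp :: "nat \<Rightarrow> nat \<Rightarrow> (nat \<Rightarrow> complex) \<Rightarrow> complex" where
  "Dp p m a = (\<Prod>i\<in>{..<p+m}. a i * (\<Prod>j\<in>{..<p+m}-{i}. (a i - a j) * (a i + a j)))"

lemma pf_Dp: "(\<lambda>x. Dp p m (ax x)) \<in> pf"
  unfolding Dp_def ax_def by (intro pf_prod pfm pf_diff pfa pfv) auto

lemma Dp_generic: assumes "Dp p m a \<noteq> 0" "d \<noteq> 0" shows "generic_params p m (\<lambda>k. d * a k)"
proof -
  have h: "a i \<noteq> 0 \<and> (\<forall>j\<in>{..<p+m}-{i}. a i - a j \<noteq> 0 \<and> a i + a j \<noteq> 0)" if "i < p+m" for i
    using assms(1) that unfolding Dp_def by auto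
  have "a i \<noteq> a j \<and> a i \<noteq> - a j" if "i < p+m" "j < p+m" "i \<noteq> j" for i j
    using h[OF that(1)] that by (auto simp: add_eq_0_iff)
  moreover have "d * a i \<noteq> - (d * a j)" if "i < p+m" "j < p+m" "i \<noteq> j" for i j
  proof
    assume "d * a i = - (d * a j)"
    then have "d * a i = d * (- a j)" by simp
    then have "a i = - a j" using assms(2) mult_left_cancel by blast
    then show False using calculation that by blast
  qed
  ultimately show ?thesis unfolding generic_params_def using h assms(2) by auto
qed

lemma Dp_nonzero: "Dp p m (\<lambda>k. of_nat k + 1) \<noteq> 0"
proof -
  have "(of_nat i + 1 :: complex) + (of_nat j + 1) \<noteq> 0" for i j
  proof -
    have "(of_nat i + 1 :: complex) + (of_nat j + 1) = of_nat (i + j + 2)" by simp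
    moreover have "of_nat (i + j + 2) \<noteq> (0::complex)" using of_nat_eq_0_iff by (metis add_2_eq_Suc' nat.distinct(1))
    ultimately show ?thesis by simp
  qed
  moreover have "(of_nat i + 1 :: complex) \<noteq> 0" for i
    by (metis of_nat_Suc of_nat_neq_0 add.commute)
  ultimately show ?thesis unfolding Dp_def by auto
qed

lemma Im_sub_G: "phi_image p m r \<subseteq> zariski_closure (2*p+m+r) (Gset p m r)"
proof
  let ?n = "2*p+m+r"
  fix s assume s: "s \<in> phi_image p m r"
  obtain x where x: "s = (M1 p m r x, M2 p m r x)" using Im_Psi[OF s] by blast
  show "s \<in> zariski_closure ?n (Gset p m r)"
  proof (rule in_closureI)
    show "s \<in> pair_space ?n" using s Im_pair_space by auto
    fix f assume f: "f \<in> poly_fun ?n" "\<forall>t\<in>Gset p m r. f t = 0"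
    define x0 where "x0 = mk (1\<^sub>m ?n) (\<lambda>k. of_nat k + 1) (\<lambda>_. 0) (\<lambda>_. 0) (0\<^sub>m 0 0)"
    have w: "(\<lambda>x. det (gx ?n x) * Dp p m (ax x)) \<in> pf" by (intro pfm pf_det[OF pfmat_gx] pf_Dp)
    have w0: "det (gx ?n x0) * Dp p m (ax x0) \<noteq> 0"
      unfolding x0_def mk_gx[OF one_carrier_mat] mk_simps using Dp_nonzero by simp
    have "f (M1 p m r x, M2 p m r x) = 0"
    proof (rule vanish_param[OF f(1) pfmat_M1 pfmat_M2 w w0])
      fix y assume "det (gx ?n y) * Dp p m (ax y) \<noteq> 0"
      then have d: "det (gx ?n y) \<noteq> 0" "Dp p m (ax y) \<noteq> 0" by auto
      have "(M1 p m r y, M2 p m r y) \<in> Gset p m r"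
        unfolding Gset_def Psi_scaled(2,3)[OF d(1)]
        using Psi_scaled(1)[OF d(1)] Dp_generic[OF d(2) d(1)] AB_anticomm by blast
      then show "f (M1 p m r y, M2 p m r y) = 0" using f(2) by blast
    qed
    then show "f s = 0" using x by simp
  qed
qed

lemma order_linear_prod: "order a (\<Prod>t\<leftarrow>ts. [:- t, 1:]) = length (filter (\<lambda>t. t = a) ts)"
proof (induction ts)
  case Nil then show ?case by simp
next
  case (Cons t ts)
  have nz: "(\<Prod>t\<leftarrow>ts. [:- t, 1:]) \<noteq> (0 :: 'a poly)" for ts :: "'a::idom list"
    using prod_list_zero_iff[of "map (\<lambda>t. [:-t,1:]) ts"] by auto
  have "order a ([:- t, 1:] * (\<Prod>t\<leftarrow>ts. [:- t, 1:])) = order a [:- t, 1:] + order a (\<Prod>t\<leftarrow>ts. [:- t, 1:])"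
    by (rule order_mult) (use nz[of "t # ts"] in simp)
  moreover have "order a [:- t, 1:] = (if t = a then 1 else 0)"
  proof (cases "t = a")
    case True then show ?thesis using order_power_n_n[of a 1] by simp
  next
    case False
    have "order a [:- t, 1:] = 0" by (rule order_0I) (use False in simp)
    then show ?thesis using False by simp
  qed
  ultimately show ?case using Cons by simp
qed

lemma distinct_filter_eq_le1: "distinct ts \<Longrightarrow> length (filter (\<lambda>t. t = a) ts) \<le> 1"
  by (induction ts) (auto simp: filter_empty_conv)

lemma jordan_matrix_ones_diag:
  assumes "\<forall>(k,a)\<in>set n_as. k = 1"
  shows "i < length n_as \<Longrightarrow> j < length n_as \<Longrightarrow> i \<noteq> j \<Longrightarrow> jordan_matrix n_as $$ (i,j) = 0"
  using assms
proof (induction n_as arbitrary: i j)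
  case Nil then show ?case by simp
next
  case (Cons na n_as)
  obtain k a where na: "na = (k,a)" by force
  have k: "k = 1" using Cons.prems na by auto
  have len: "sum_list (map fst n_as) = length n_as" using Cons.prems(4)
    by (induction n_as) auto
  have J: "jordan_matrix (na # n_as) = four_block_mat (jordan_block 1 a) (0\<^sub>m 1 (length n_as))
     (0\<^sub>m (length n_as) 1) (jordan_matrix n_as)"
    unfolding na k jordan_matrix_Cons len ..
  have dims: "dim_row (jordan_matrix n_as) = length n_as" "dim_col (jordan_matrix n_as) = length n_as"
    using len by auto
  show ?case
  proof (cases "i = 0")
    case True
    then have "j \<noteq> 0" using Cons.prems by auto
    then show ?thesis unfolding J using Cons.prems True dims by simp
  next
    case False
    show ?thesis
    proof (cases "j = 0")
      case True then show ?thesis unfolding J using Cons.prems False dims by simp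
    next
      case False2: False
      have "jordan_matrix n_as $$ (i - 1, j - 1) = 0"
        by (rule Cons.IH) (use Cons.prems False False2 in auto)
      then show ?thesis unfolding J using Cons.prems False False2 dims by simp
    qed
  qed
qed

lemma diagonalize_upper:
  fixes T :: "complex mat"
  assumes T: "T \<in> carrier_mat r r" and ut: "\<And>i j. i < r \<Longrightarrow> j < i \<Longrightarrow> T $$ (i,j) = 0"
    and dist: "\<And>i j. i < r \<Longrightarrow> j < r \<Longrightarrow> i \<noteq> j \<Longrightarrow> T $$ (i,i) \<noteq> T $$ (j,j)"
  shows "\<exists>P Q e. P \<in> carrier_mat r r \<and> Q \<in> carrier_mat r r \<and> P * Q = 1\<^sub>m r \<and> Q * P = 1\<^sub>m r \<and>
     T = P * mat r r (\<lambda>(i,j). if i = j then e i else 0) * Q"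
proof -
  have utT: "upper_triangular T" unfolding upper_triangular_def using T ut by auto
  have cp: "char_poly T = (\<Prod>a\<leftarrow>diag_mat T. [:- a, 1:])"
    by (rule char_poly_upper_triangular[OF T utT])
  obtain n_as where jnf: "jordan_nf T n_as" using jordan_nf_exists[OF T cp] by blast
  have dm: "diag_mat T = map (\<lambda>i. T $$ (i,i)) [0..<r]" unfolding diag_mat_def using T by simp
  have "inj_on (\<lambda>i. T $$ (i,i)) {0..<r}" by (rule inj_onI) (use dist in force)
  then have dd: "distinct (diag_mat T)" unfolding dm by (simp add: distinct_map)
  have sizes: "\<forall>(k,a)\<in>set n_as. k = 1"
  proof (intro ballI, clarify)
    fix k a assume mem: "(k,a) \<in> set n_as"
    have "k \<le> order a (char_poly T)" by (rule jordan_nf_block_size_order_bound[OF jnf mem])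
    also have "\<dots> \<le> 1" unfolding cp order_linear_prod by (rule distinct_filter_eq_le1[OF dd])
    finally have "k \<le> 1" .
    moreover have "k \<noteq> 0"
    proof
      assume "k = 0"
      then have "(0, a) \<in> set n_as" using mem by simp
      then have "0 \<in> fst ` set n_as" by (metis fst_conv image_eqI)
      then show False using jnf unfolding jordan_nf_def by blast
    qed
    ultimately show "k = 1" by simp
  qed
  have sim: "similar_mat T (jordan_matrix n_as)" using jnf unfolding jordan_nf_def by auto
  then obtain P Q where wit: "similar_mat_wit T (jordan_matrix n_as) P Q" unfolding similar_mat_def by blast
  have dT: "dim_row T = r" using T by auto
  have PQ: "{T, jordan_matrix n_as, P, Q} \<subseteq> carrier_mat r r" "P * Q = 1\<^sub>m r" "Q * P = 1\<^sub>m r"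
    "T = P * jordan_matrix n_as * Q"
    using wit unfolding similar_mat_wit_def Let_def dT by blast+
  have len: "sum_list (map fst n_as) = length n_as"
    using sizes proof (induction n_as)
    case (Cons na n_as)
    obtain k a where na: "na = (k,a)" by force
    have "k = 1" using Cons.prems na by auto
    then show ?case using Cons na by simp
  qed simp
  have "jordan_matrix n_as \<in> carrier_mat r r" using PQ(1) by blast
  then have "dim_row (jordan_matrix n_as) = r" by (rule carrier_matD(1))
  then have lr: "length n_as = r" using len jordan_matrix_dim(1)[of n_as] by simp
  define e where "e i = jordan_matrix n_as $$ (i,i)" for i
  have "jordan_matrix n_as = mat r r (\<lambda>(i,j). if i = j then e i else 0)"
  proof (rule eq_matI)
    fix i j assume "i < dim_row (mat r r (\<lambda>(i,j). if i = j then e i else 0))" "j < dim_col (mat r r (\<lambda>(i,j). if i = j then e i else 0))"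
    then have ij: "i < r" "j < r" by auto
    show "jordan_matrix n_as $$ (i,j) = mat r r (\<lambda>(i,j). if i = j then e i else 0) $$ (i,j)"
      using jordan_matrix_ones_diag[OF sizes, of i j] ij lr by (auto simp: e_def)
  qed (use PQ(1) in auto)
  then have Teq: "T = P * mat r r (\<lambda>(i,j). if i = j then e i else 0) * Q" using PQ(4) by simp
  have Pc: "P \<in> carrier_mat r r" "Q \<in> carrier_mat r r" using PQ(1) by auto
  show ?thesis using Teq Pc PQ(2,3) by blast
qed

definition kap :: "nat \<Rightarrow> nat \<Rightarrow> nat" where "kap p i = (if i < 2*p then i div 2 else i - p)"
definition sg :: "nat \<Rightarrow> nat \<Rightarrow> complex" where "sg p i = (if i < 2*p \<and> odd i then -1 else 1)"

lemma dval_kap: "i < 2*p+m \<Longrightarrow> dval p m a i = sg p i * a (kap p i) \<and> kap p i < p+m"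
  unfolding dval_def sg_def kap_def by auto

lemma dval_zero: "\<not> i < 2*p+m \<Longrightarrow> dval p m a i = 0"
  unfolding dval_def by auto

lemma sg_cases: "sg p i = 1 \<or> sg p i = -1" unfolding sg_def by auto

lemma kap_eq: assumes "i < 2*p+m" "j < 2*p+m" "kap p i = kap p j" "i \<noteq> j"
  shows "i < 2*p \<and> j < 2*p \<and> i div 2 = j div 2 \<and> ((even i \<and> j = i+1) \<or> (odd i \<and> i = j+1))"
proof (cases "i < 2*p")
  case True
  then have ki: "kap p i = i div 2" "i div 2 < p" unfolding kap_def by auto
  have j: "j < 2*p"
  proof (rule ccontr)
    assume "\<not> j < 2*p"
    then have "kap p j = j - p" "j - p \<ge> p" unfolding kap_def by auto
    then show False using ki assms(3) by auto
  qed
  then have "i div 2 = j div 2" using assms(3) True unfolding kap_def by auto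
  then have "(even i \<and> j = i+1) \<or> (odd i \<and> i = j+1)" using assms(4) by presburger
  then show ?thesis using True j \<open>i div 2 = j div 2\<close> by blast
next
  case False
  then have ki: "kap p i = i - p" "i - p \<ge> p" unfolding kap_def by auto
  have j: "\<not> j < 2*p"
  proof
    assume "j < 2*p"
    then have "kap p j = j div 2" "j div 2 < p" unfolding kap_def by auto
    then show False using ki assms(3) by auto
  qed
  then have "kap p j = j - p" unfolding kap_def by auto
  then have "i = j" using ki assms(3) False j by auto
  then show ?thesis using assms(4) by blast
qed

lemma dval_nz: assumes "generic_params p m a" "i < 2*p+m" shows "dval p m a i \<noteq> 0"
  using dval_kap[OF assms(2), of a] sg_cases[of p i] assms(1) unfolding generic_params_def by auto

lemma dval_sum_nz: assumes g: "generic_params p m a" and ij: "i < 2*p+m" "j < 2*p+m"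
  and nc: "\<not> (i < 2*p \<and> j < 2*p \<and> i div 2 = j div 2 \<and> even i \<and> j = i + 1)"
          "\<not> (i < 2*p \<and> j < 2*p \<and> i div 2 = j div 2 \<and> odd i \<and> i = j + 1)"
  shows "dval p m a i + dval p m a j \<noteq> 0"
proof (cases "i = j")
  case True
  then show ?thesis using dval_nz[OF g ij(1)] by auto
next
  case False
  have ki: "kap p i \<noteq> kap p j" using kap_eq[OF ij _ False] nc by blast
  obtain k l where kl: "dval p m a i = sg p i * a k" "dval p m a j = sg p j * a l" "k < p+m" "l < p+m" "k \<noteq> l"
    using dval_kap[OF ij(1), of a] dval_kap[OF ij(2), of a] ki by blast
  have ne: "a k \<noteq> a l" "a k \<noteq> - a l" using g kl unfolding generic_params_def by auto
  have "sg p i * a k + sg p j * a l \<noteq> 0"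
    using sg_cases[of p i] sg_cases[of p j] ne by (auto simp: add_eq_0_iff eq_neg_iff_add_eq_0[symmetric])
  then show ?thesis using kl by simp
qed


definition At :: "nat \<Rightarrow> nat \<Rightarrow> (nat \<Rightarrow> complex) \<Rightarrow> complex mat" where
  "At p m a = mat (2*p+m) (2*p+m) (\<lambda>(i,j). if i = j then dval p m a i else 0)"

definition Bt :: "nat \<Rightarrow> nat \<Rightarrow> (nat \<Rightarrow> complex) \<Rightarrow> (nat \<Rightarrow> complex) \<Rightarrow> complex mat" where
  "Bt p m b c = mat (2*p+m) (2*p+m) (\<lambda>(i,j).
       if i < 2*p \<and> j < 2*p \<and> i div 2 = j div 2 \<and> even i \<and> j = i + 1 then b (i div 2)
       else if i < 2*p \<and> j < 2*p \<and> i div 2 = j div 2 \<and> odd i \<and> i = j + 1 then c (i div 2)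
       else 0)"

definition Dg :: "nat \<Rightarrow> (nat \<Rightarrow> complex) \<Rightarrow> complex mat" where
  "Dg r e = mat r r (\<lambda>(i,j). if i = j then e i else 0)"

lemma At_carrier[simp]: "At p m a \<in> carrier_mat (2*p+m) (2*p+m)" unfolding At_def by auto
lemma Bt_carrier[simp]: "Bt p m b c \<in> carrier_mat (2*p+m) (2*p+m)" unfolding Bt_def by auto
lemma Dg_carrier[simp]: "Dg r e \<in> carrier_mat r r" unfolding Dg_def by auto

definition c1 :: "nat \<Rightarrow> nat \<Rightarrow> nat \<Rightarrow> bool" where
  "c1 p i j \<longleftrightarrow> i < 2*p \<and> j < 2*p \<and> i div 2 = j div 2 \<and> even i \<and> j = i + 1"
definition c2 :: "nat \<Rightarrow> nat \<Rightarrow> nat \<Rightarrow> bool" where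
  "c2 p i j \<longleftrightarrow> i < 2*p \<and> j < 2*p \<and> i div 2 = j div 2 \<and> odd i \<and> i = j + 1"

lemma Bt_index: "i < 2*p+m \<Longrightarrow> j < 2*p+m \<Longrightarrow>
  Bt p m b c $$ (i,j) = (if c1 p i j then b (i div 2) else if c2 p i j then c (i div 2) else 0)"
  unfolding Bt_def c1_def c2_def by (simp only: index_mat(1) case_prod_conv)

lemma B_mat_index': "i < 2*p+m+r \<Longrightarrow> j < 2*p+m+r \<Longrightarrow> B_mat p m r b c $$ (i,j) =
   (if c1 p i j then b (i div 2) else if c2 p i j then c (i div 2)
    else if 2*p+m \<le> i \<and> i = j then b (p + (i - (2*p+m))) else 0)"
  unfolding c1_def c2_def by (rule B_mat_index)

lemma At_index: "i < 2*p+m \<Longrightarrow> j < 2*p+m \<Longrightarrow> At p m a $$ (i,j) = (if i = j then dval p m a i else 0)"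
  unfolding At_def by simp

lemma c1_lt: "c1 p i j \<Longrightarrow> i < 2*p \<and> j < 2*p" unfolding c1_def by blast
lemma c2_lt: "c2 p i j \<Longrightarrow> i < 2*p \<and> j < 2*p" unfolding c2_def by blast

lemma fb_index: assumes "X \<in> carrier_mat s s" "Y \<in> carrier_mat r r" "i < s+r" "j < s+r"
  shows "four_block_mat X (0\<^sub>m s r) (0\<^sub>m r s) Y $$ (i,j) =
     (if i < s \<and> j < s then X $$ (i,j) else if s \<le> i \<and> s \<le> j then Y $$ (i-s, j-s) else 0)"
proof -
  have d: "dim_row X = s" "dim_col X = s" "dim_row Y = r" "dim_col Y = r" using assms(1,2) by auto
  show ?thesis using assms(3,4) by (auto simp: d)
qed

lemma fb_carrier: "X \<in> carrier_mat s s \<Longrightarrow> Y \<in> carrier_mat r r \<Longrightarrow> four_block_mat X (0\<^sub>m s r) (0\<^sub>m r s) Y \<in> carrier_mat (s+r) (s+r)"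
  by (rule four_block_carrier_mat) auto

lemma At_dim[simp]: "dim_row (At p m a) = 2*p+m" "dim_col (At p m a) = 2*p+m" unfolding At_def by auto
lemma Bt_dim[simp]: "dim_row (Bt p m b c) = 2*p+m" "dim_col (Bt p m b c) = 2*p+m" unfolding Bt_def by auto
lemma Dg_dim[simp]: "dim_row (Dg r e) = r" "dim_col (Dg r e) = r" unfolding Dg_def by auto

lemma A_four: "A_mat p m r a = four_block_mat (At p m a) (0\<^sub>m (2*p+m) r) (0\<^sub>m r (2*p+m)) (0\<^sub>m r r)"
proof (rule eq_matI)
  let ?R = "four_block_mat (At p m a) (0\<^sub>m (2*p+m) r) (0\<^sub>m r (2*p+m)) (0\<^sub>m r r)"
  have Rc: "?R \<in> carrier_mat (2*p+m+r) (2*p+m+r)" by (rule fb_carrier) auto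
  fix i j assume "i < dim_row ?R" "j < dim_col ?R"
  then have ij: "i < 2*p+m+r" "j < 2*p+m+r" using Rc by auto
  have R: "?R $$ (i,j) = (if i < 2*p+m \<and> j < 2*p+m then At p m a $$ (i,j) else if 2*p+m \<le> i \<and> 2*p+m \<le> j then 0\<^sub>m r r $$ (i-(2*p+m), j-(2*p+m)) else 0)"
    by (rule fb_index) (use ij in auto)
  show "A_mat p m r a $$ (i,j) = ?R $$ (i,j)"
  proof (cases "i < 2*p+m \<and> j < 2*p+m")
    case True then show ?thesis unfolding R A_mat_index[OF ij] using At_index[of i p m j a] by simp
  next
    case False
    have "A_mat p m r a $$ (i,j) = 0"
      unfolding A_mat_index[OF ij] using False dval_zero[of i p m a] by auto
    moreover have "?R $$ (i,j) = 0" unfolding R using False ij by auto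
    ultimately show ?thesis by simp
  qed
qed (auto simp: At_def)

lemma B_four: "B_mat p m r b c = four_block_mat (Bt p m b c) (0\<^sub>m (2*p+m) r) (0\<^sub>m r (2*p+m)) (Dg r (\<lambda>i. b (p+i)))"
proof (rule eq_matI)
  let ?R = "four_block_mat (Bt p m b c) (0\<^sub>m (2*p+m) r) (0\<^sub>m r (2*p+m)) (Dg r (\<lambda>i. b (p+i)))"
  have Rc: "?R \<in> carrier_mat (2*p+m+r) (2*p+m+r)" by (rule fb_carrier) auto
  fix i j assume "i < dim_row ?R" "j < dim_col ?R"
  then have ij: "i < 2*p+m+r" "j < 2*p+m+r" using Rc by auto
  have R: "?R $$ (i,j) = (if i < 2*p+m \<and> j < 2*p+m then Bt p m b c $$ (i,j) else if 2*p+m \<le> i \<and> 2*p+m \<le> j then Dg r (\<lambda>i. b (p+i)) $$ (i-(2*p+m), j-(2*p+m)) else 0)"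
    by (rule fb_index) (use ij in auto)
  show "B_mat p m r b c $$ (i,j) = ?R $$ (i,j)"
  proof (cases "i < 2*p+m \<and> j < 2*p+m")
    case True
    have "\<not> (2*p+m \<le> i \<and> i = j)" using True by auto
    then show ?thesis unfolding R B_mat_index'[OF ij] using True Bt_index[of i p m j b c] by simp
  next
    case False
    have n12: "\<not> c1 p i j" "\<not> c2 p i j" using False c1_lt[of p i j] c2_lt[of p i j] by auto
    show ?thesis
    proof (cases "2*p+m \<le> i \<and> 2*p+m \<le> j")
      case True
      have e: "(i = j) = (i - (2*p+m) = j - (2*p+m))" using True by auto
      have "Dg r (\<lambda>i. b (p+i)) $$ (i-(2*p+m), j-(2*p+m)) = (if i - (2*p+m) = j - (2*p+m) then b (p + (i - (2*p+m))) else 0)"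
      proof -
        have lt: "i - (2*p+m) < r" "j - (2*p+m) < r" using True ij by auto
        show ?thesis by (simp only: Dg_def index_mat(1)[OF lt] case_prod_conv)
      qed
      then show ?thesis unfolding R B_mat_index'[OF ij] using n12 True False e by simp
    next
      case False2: False
      have x1: "(i < 2*p+m \<and> j < 2*p+m) = False" using False by simp
      have x2: "(2*p+m \<le> i \<and> 2*p+m \<le> j) = False" using False2 by simp
      have x3: "(2*p+m \<le> i \<and> i = j) = False" using False False2 by auto
      have x4: "c1 p i j = False" "c2 p i j = False" using n12 by auto
      show ?thesis unfolding R B_mat_index'[OF ij] x1 x2 x3 x4 if_False ..
    qed
  qed
qed (auto simp: Bt_def Dg_def)


lemma B_structure:
  assumes g: "generic_params p m a" and B: "B \<in> carrier_mat (2*p+m+r) (2*p+m+r)"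
    and ac: "(A_mat p m r a, B) \<in> anticomm_var (2*p+m+r)"
  shows "B = four_block_mat (Bt p m (\<lambda>k. B $$ (2*k, 2*k+1)) (\<lambda>k. B $$ (2*k+1, 2*k))) (0\<^sub>m (2*p+m) r) (0\<^sub>m r (2*p+m))
     (mat r r (\<lambda>(i,j). B $$ (i + (2*p+m), j + (2*p+m))))"
    (is "B = ?R")
proof -
  let ?n = "2*p+m+r" and ?s = "2*p+m"
  let ?C = "mat r r (\<lambda>(i,j). B $$ (i + (2*p+m), j + (2*p+m)))"
  let ?Bt = "Bt p m (\<lambda>k. B $$ (2*k, 2*k+1)) (\<lambda>k. B $$ (2*k+1, 2*k))"
  have acm: "A_mat p m r a * B + B * A_mat p m r a = 0\<^sub>m ?n ?n" using ac unfolding anticomm_var_def by simp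
  have all: "\<forall>i<?n. \<forall>j<?n. (dval p m a i + dval p m a j) * B $$ (i,j) = 0"
    using anticomm_entry[OF refl B, of a] acm by blast
  have ent: "(dval p m a i + dval p m a j) * B $$ (i,j) = 0" if "i < ?n" "j < ?n" for i j
    using all that by blast
  have Rc: "?R \<in> carrier_mat ?n ?n" by (rule fb_carrier) auto
  show ?thesis
  proof (rule eq_matI)
    fix i j assume "i < dim_row ?R" "j < dim_col ?R"
    then have ij: "i < ?n" "j < ?n" using Rc by auto
    have R: "?R $$ (i,j) = (if i < ?s \<and> j < ?s then ?Bt $$ (i,j) else if ?s \<le> i \<and> ?s \<le> j then ?C $$ (i-?s, j-?s) else 0)"
      by (rule fb_index) (use ij in auto)
    show "B $$ (i,j) = ?R $$ (i,j)"
    proof (cases "i < ?s \<and> j < ?s")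
      case True
      then have ij': "i < ?s" "j < ?s" by auto
      have "?R $$ (i,j) = ?Bt $$ (i,j)" unfolding R using True by (simp only: if_True simp_thms)
      also have "\<dots> = (if c1 p i j then B $$ (2*(i div 2), 2*(i div 2)+1) else if c2 p i j then B $$ (2*(i div 2)+1, 2*(i div 2)) else 0)"
        by (rule Bt_index[OF ij'])
      finally have R2: "?R $$ (i,j) = (if c1 p i j then B $$ (2*(i div 2), 2*(i div 2)+1) else if c2 p i j then B $$ (2*(i div 2)+1, 2*(i div 2)) else 0)" .
      show ?thesis
      proof (cases "c1 p i j")
        case c1: True
        then have h: "even i" "j = i + 1" unfolding c1_def by blast+
        have e1: "2 * (i div 2) = i" using h(1) by (rule even_two_times_div_two)
        then have e: "2 * (i div 2) = i" "i + 1 = j" using h(2) by simp_all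
        show ?thesis unfolding R2 e using c1 by (simp only: if_True)
      next
        case nc1: False
        show ?thesis
        proof (cases "c2 p i j")
          case c2: True
          then have h: "odd i" "i = j + 1" unfolding c2_def by blast+
          have e1: "2 * (i div 2) + 1 = i" using h(1) by (rule odd_two_times_div_two_succ)
          then have e: "2 * (i div 2) = j" "j + 1 = i" using h(2) by simp_all
          have "c1 p i j = False" using nc1 by simp
          then show ?thesis unfolding R2 e using c2 by (simp only: if_True if_False)
        next
          case nc2: False
          have "dval p m a i + dval p m a j \<noteq> 0"
            by (rule dval_sum_nz[OF g ij' nc1[unfolded c1_def] nc2[unfolded c2_def]])
          then have "B $$ (i,j) = 0" using ent[OF ij] by simp
          moreover have "c1 p i j = False" "c2 p i j = False" using nc1 nc2 by simp_all
          ultimately show ?thesis unfolding R2 by (simp only: if_False)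
        qed
      qed
    next
      case False
      show ?thesis
      proof (cases "?s \<le> i \<and> ?s \<le> j")
        case True
        have lt: "i - ?s < r" "j - ?s < r" using True ij by auto
        have "?C $$ (i-?s, j-?s) = B $$ (i - ?s + ?s, j - ?s + ?s)"
          by (simp only: index_mat(1)[OF lt] case_prod_conv)
        also have "\<dots> = B $$ (i,j)" using True by simp
        finally show ?thesis unfolding R using True False by simp
      next
        case False2: False
        have "dval p m a i + dval p m a j \<noteq> 0"
        proof (cases "i < ?s")
          case True
          then have "\<not> j < ?s" using False by auto
          then show ?thesis using dval_nz[OF g True] dval_zero by simp
        next
          case F: False
          then have "j < ?s" using False2 by auto
          then show ?thesis using dval_nz[OF g, of j] dval_zero[OF F] by simp
        qed
        then have "B $$ (i,j) = 0" using ent[OF ij] by simp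
        moreover have "(i < ?s \<and> j < ?s) = False" "(?s \<le> i \<and> ?s \<le> j) = False" using False False2 by simp_all
        ultimately show ?thesis unfolding R by (simp only: if_False)
      qed
    qed
  qed (use B Rc in auto)
qed

lemma conj_four:
  fixes X Y P Q :: "complex mat"
  assumes X: "X \<in> carrier_mat s s" and Y: "Y \<in> carrier_mat r r" and P: "P \<in> carrier_mat r r" and Q: "Q \<in> carrier_mat r r"
  shows "four_block_mat (1\<^sub>m s) (0\<^sub>m s r) (0\<^sub>m r s) P * four_block_mat X (0\<^sub>m s r) (0\<^sub>m r s) Y *
         four_block_mat (1\<^sub>m s) (0\<^sub>m s r) (0\<^sub>m r s) Q = four_block_mat X (0\<^sub>m s r) (0\<^sub>m r s) (P * Y * Q)"
proof -
  have "four_block_mat (1\<^sub>m s) (0\<^sub>m s r) (0\<^sub>m r s) P * four_block_mat X (0\<^sub>m s r) (0\<^sub>m r s) Y =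
        four_block_mat X (0\<^sub>m s r) (0\<^sub>m r s) (P * Y)"
    by (subst mult_four_block_mat[OF one_carrier_mat zero_carrier_mat zero_carrier_mat P X zero_carrier_mat zero_carrier_mat Y])
       (use X Y P in \<open>simp add: left_mult_one_mat[OF X]\<close>)
  moreover have "four_block_mat X (0\<^sub>m s r) (0\<^sub>m r s) (P * Y) * four_block_mat (1\<^sub>m s) (0\<^sub>m s r) (0\<^sub>m r s) Q =
        four_block_mat X (0\<^sub>m s r) (0\<^sub>m r s) (P * Y * Q)"
    by (subst mult_four_block_mat[OF X zero_carrier_mat zero_carrier_mat mult_carrier_mat[OF P Y] one_carrier_mat zero_carrier_mat zero_carrier_mat Q])
       (use X Y P Q in simp)
  ultimately show ?thesis by simp
qed

lemma GL_four:
  fixes P Q :: "complex mat"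
  assumes P: "P \<in> carrier_mat r r" and Q: "Q \<in> carrier_mat r r" and PQ: "P * Q = 1\<^sub>m r" "Q * P = 1\<^sub>m r"
  shows "GL_inv (s+r) (four_block_mat (1\<^sub>m s) (0\<^sub>m s r) (0\<^sub>m r s) P) (four_block_mat (1\<^sub>m s) (0\<^sub>m s r) (0\<^sub>m r s) Q)"
proof -
  have "four_block_mat (1\<^sub>m s) (0\<^sub>m s r) (0\<^sub>m r s) P * four_block_mat (1\<^sub>m s) (0\<^sub>m s r) (0\<^sub>m r s) Q = 1\<^sub>m (s+r)"
    by (subst mult_four_block_mat[OF one_carrier_mat zero_carrier_mat zero_carrier_mat P one_carrier_mat zero_carrier_mat zero_carrier_mat Q])
       (use P Q PQ in simp)
  moreover have "four_block_mat (1\<^sub>m s) (0\<^sub>m s r) (0\<^sub>m r s) Q * four_block_mat (1\<^sub>m s) (0\<^sub>m s r) (0\<^sub>m r s) P = 1\<^sub>m (s+r)"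
    by (subst mult_four_block_mat[OF one_carrier_mat zero_carrier_mat zero_carrier_mat Q one_carrier_mat zero_carrier_mat zero_carrier_mat P])
       (use P Q PQ in simp)
  ultimately show ?thesis unfolding GL_inv_def using P Q by (auto intro!: four_block_carrier_mat)
qed

lemma A_conj:
  assumes P: "P \<in> carrier_mat r r" and Q: "Q \<in> carrier_mat r r"
  shows "four_block_mat (1\<^sub>m (2*p+m)) (0\<^sub>m (2*p+m) r) (0\<^sub>m r (2*p+m)) P * A_mat p m r a *
         four_block_mat (1\<^sub>m (2*p+m)) (0\<^sub>m (2*p+m) r) (0\<^sub>m r (2*p+m)) Q = A_mat p m r a"
  unfolding A_four conj_four[OF At_carrier zero_carrier_mat P Q] using P Q by simp

lemma Im_conj:
  assumes gl: "GL_inv (2*p+m+r) g h" and K: "GL_inv (2*p+m+r) k k'"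
  shows "(g * (k * A_mat p m r a * k') * adj_mat g, g * (k * B_mat p m r b c * k') * adj_mat g) \<in> phi_image p m r"
proof -
  let ?n = "2*p+m+r"
  define d where "d = det g"
  have c: "g \<in> carrier_mat ?n ?n" "h \<in> carrier_mat ?n ?n" "k \<in> carrier_mat ?n ?n" "k' \<in> carrier_mat ?n ?n"
    using gl K unfolding GL_inv_def by auto
  have sm: "d \<cdot>\<^sub>m (k * M * k') = k * (d \<cdot>\<^sub>m M) * k'" if "M \<in> carrier_mat ?n ?n" for M
    using c that by (simp add: mult_smult_distrib[of _ ?n ?n] mult_smult_assoc_mat[of _ ?n ?n])
  have as: "g * (k * M * k') * h = (g * k) * M * (k' * h)" if "M \<in> carrier_mat ?n ?n" for M
    using c that by (simp add: assoc_mult_mat[of _ ?n ?n _ ?n _ ?n])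
  have e1: "g * (k * A_mat p m r a * k') * adj_mat g = (g * k) * A_mat p m r (\<lambda>i. d * a i) * (k' * h)"
    unfolding GL_scale[OF gl mult_carrier_mat[OF mult_carrier_mat[OF c(3) A_mat_carrier] c(4)]] d_def[symmetric]
      sm[OF A_mat_carrier] A_mat_smult[symmetric] by (rule as) simp
  have e2: "g * (k * B_mat p m r b c * k') * adj_mat g = (g * k) * B_mat p m r (\<lambda>i. d * b i) (\<lambda>i. d * c i) * (k' * h)"
    unfolding GL_scale[OF gl mult_carrier_mat[OF mult_carrier_mat[OF c(3) B_mat_carrier] c(4)]] d_def[symmetric]
      sm[OF B_mat_carrier] B_mat_smult[symmetric] by (rule as) simp
  show ?thesis unfolding e1 e2 phi_image_def Let_def using GL_mult[OF gl K] by blast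
qed

lemma Bt_index_b: "Bt p m (\<lambda>k. if k < p then b k else e (k - p)) c = Bt p m b c"
proof (rule eq_matI)
  fix i j assume "i < dim_row (Bt p m b c)" "j < dim_col (Bt p m b c)"
  then have ij: "i < 2*p+m" "j < 2*p+m" by auto
  have "c1 p i j \<Longrightarrow> i div 2 < p" using c1_lt[of p i j] by auto
  then show "Bt p m (\<lambda>k. if k < p then b k else e (k - p)) c $$ (i,j) = Bt p m b c $$ (i,j)"
    unfolding Bt_index[OF ij] by auto
qed auto

lemma Bt_smult: "Bt p m (\<lambda>k. d * b k) (\<lambda>k. d * c k) = d \<cdot>\<^sub>m Bt p m b c"
proof (rule eq_matI)
  fix i j assume "i < dim_row (d \<cdot>\<^sub>m Bt p m b c)" "j < dim_col (d \<cdot>\<^sub>m Bt p m b c)"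
  then have ij: "i < 2*p+m" "j < 2*p+m" by auto
  show "Bt p m (\<lambda>k. d * b k) (\<lambda>k. d * c k) $$ (i,j) = (d \<cdot>\<^sub>m Bt p m b c) $$ (i,j)"
    using ij by (simp only: index_smult_mat(1) Bt_dim Bt_index if_distrib[where f="(*) d"] mult_zero_right)
qed auto

definition N2 :: "nat \<Rightarrow> nat \<Rightarrow> nat \<Rightarrow> (nat \<Rightarrow> complex) \<Rightarrow> complex mat" where
  "N2 p m r x = gx (2*p+m+r) x * four_block_mat (Bt p m (bx x) (cx x)) (0\<^sub>m (2*p+m) r) (0\<^sub>m r (2*p+m)) (tx r x)
     * adj_mat (gx (2*p+m+r) x)"

definition wU :: "nat \<Rightarrow> nat \<Rightarrow> nat \<Rightarrow> (nat \<Rightarrow> complex) \<Rightarrow> complex" where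
  "wU p m r x = det (gx (2*p+m+r) x) * (\<Prod>i\<in>{..<r}. \<Prod>j\<in>{..<r}-{i}. (tx r x $$ (i,i) - tx r x $$ (j,j)))"

lemma pfmat_Bt: "pfmat (2*p+m) (2*p+m) (\<lambda>x. Bt p m (bx x) (cx x))"
  unfolding Bt_def bx_def cx_def by (rule pfmat_mat) (intro pf_if pfv pfc)

lemma pfmat_N2: "pfmat (2*p+m+r) (2*p+m+r) (N2 p m r)"
proof -
  have "pfmat (2*p+m+r) (2*p+m+r) (\<lambda>x. four_block_mat (Bt p m (bx x) (cx x)) (0\<^sub>m (2*p+m) r) (0\<^sub>m r (2*p+m)) (tx r x))"
    by (rule pfmat_four_block[OF pfmat_Bt pfmat_const pfmat_const pfmat_tx]) auto
  then show ?thesis unfolding N2_def by (rule pfmat_mult[OF pfmat_mult[OF pfmat_gx] pfmat_adj[OF pfmat_gx]])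
qed

lemma pf_wU: "wU p m r \<in> pf"
proof -
  have "(\<lambda>x. wU p m r x) \<in> pf" unfolding wU_def
    by (intro pfm pf_det[OF pfmat_gx] pf_prod pf_diff pfmat_entry[OF pfmat_tx]) auto
  then show ?thesis by simp
qed

lemma wU_x0: "wU p m r (mk (1\<^sub>m (2*p+m+r)) (\<lambda>_. 0) (\<lambda>_. 0) (\<lambda>_. 0) (Dg r of_nat)) \<noteq> 0"
proof -
  have t: "tx r (mk (1\<^sub>m (2*p+m+r)) (\<lambda>_. 0) (\<lambda>_. 0) (\<lambda>_. 0) (Dg r of_nat)) = Dg r of_nat"
    by (rule mk_tx) (auto simp: Dg_def)
  have "(of_nat i :: complex) - of_nat j \<noteq> 0" if "i \<noteq> j" for i j using that by simp
  then show ?thesis unfolding wU_def t mk_gx[OF one_carrier_mat] by (auto simp: Dg_def)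
qed

lemma vanish_upper:
  assumes f: "f \<in> poly_fun (2*p+m+r)" and van: "\<forall>t\<in>phi_image p m r. f t = 0"
    and gl: "GL_inv (2*p+m+r) G H" and J: "J \<in> carrier_mat r r"
    and ut: "\<And>i j. i < r \<Longrightarrow> j < i \<Longrightarrow> J $$ (i,j) = 0"
  shows "f (G * A_mat p m r a * H, G * four_block_mat (Bt p m b c) (0\<^sub>m (2*p+m) r) (0\<^sub>m r (2*p+m)) J * H) = 0"
proof -
  let ?n = "2*p+m+r" and ?s = "2*p+m"
  let ?K = "\<lambda>P. four_block_mat (1\<^sub>m ?s) (0\<^sub>m ?s r) (0\<^sub>m r ?s) P"
  have all: "f (M1 p m r x, N2 p m r x) = 0" for x
  proof (rule vanish_param[OF f pfmat_M1 pfmat_N2 pf_wU wU_x0])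
    fix y assume w: "wU p m r y \<noteq> 0"
    let ?g = "gx ?n y" and ?T = "tx r y"
    have d: "det ?g \<noteq> 0" and pr: "(\<Prod>i\<in>{..<r}. \<Prod>j\<in>{..<r}-{i}. (?T $$ (i,i) - ?T $$ (j,j))) \<noteq> 0"
      using w unfolding wU_def by auto
    have dist: "?T $$ (i,i) \<noteq> ?T $$ (j,j)" if "i < r" "j < r" "i \<noteq> j" for i j
      using pr that by auto
    have utT: "?T $$ (i,j) = 0" if "i < r" "j < i" for i j using that unfolding tx_def by auto
    obtain P Q e where PQ: "P \<in> carrier_mat r r" "Q \<in> carrier_mat r r" "P * Q = 1\<^sub>m r" "Q * P = 1\<^sub>m r"
      "?T = P * mat r r (\<lambda>(i,j). if i = j then e i else 0) * Q"
      using diagonalize_upper[OF tx_carrier utT dist] by blast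
    have glK: "GL_inv ?n (?K P) (?K Q)" using GL_four[OF PQ(1-4), of ?s] by simp
    define b' where "b' k = (if k < p then bx y k else e (k - p))" for k
    have Beq: "B_mat p m r b' (cx y) = four_block_mat (Bt p m (bx y) (cx y)) (0\<^sub>m ?s r) (0\<^sub>m r ?s) (Dg r e)"
      unfolding B_four b'_def Bt_index_b by simp
    have Bm: "?K P * B_mat p m r b' (cx y) * ?K Q = four_block_mat (Bt p m (bx y) (cx y)) (0\<^sub>m ?s r) (0\<^sub>m r ?s) ?T"
    proof -
      have T: "?T = P * Dg r e * Q" using PQ(5) unfolding Dg_def .
      show ?thesis unfolding Beq T by (rule conj_four[OF Bt_carrier Dg_carrier PQ(1,2)])
    qed
    have Am: "?K P * A_mat p m r (ax y) * ?K Q = A_mat p m r (ax y)" by (rule A_conj[OF PQ(1,2)])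
    have "(?g * (?K P * A_mat p m r (ax y) * ?K Q) * adj_mat ?g, ?g * (?K P * B_mat p m r b' (cx y) * ?K Q) * adj_mat ?g)
          \<in> phi_image p m r"
      by (rule Im_conj[OF GL_of_det[OF gx_carrier d] glK])
    then have "(M1 p m r y, N2 p m r y) \<in> phi_image p m r" unfolding Am Bm M1_def N2_def .
    then show "f (M1 p m r y, N2 p m r y) = 0" using van by blast
  qed
  have gc: "G \<in> carrier_mat ?n ?n" using gl unfolding GL_inv_def by auto
  define d where "d = det G"
  have d0: "d \<noteq> 0" using GL_det[OF gl] d_def by auto
  define x where "x = mk G (\<lambda>k. a k / d) (\<lambda>k. b k / d) (\<lambda>k. c k / d) ((1 / d) \<cdot>\<^sub>m J)"
  have gx: "gx ?n x = G" unfolding x_def using mk_gx[OF gc] by blast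
  have tx: "tx r x = (1 / d) \<cdot>\<^sub>m J" unfolding x_def by (rule mk_tx) (use J ut in auto)
  have e1: "(\<lambda>k. d * (a k / d)) = a" "(\<lambda>k. d * (b k / d)) = b" "(\<lambda>k. d * (c k / d)) = c" using d0 by auto
  have eJ: "d \<cdot>\<^sub>m ((1 / d) \<cdot>\<^sub>m J) = J" by (rule eq_matI) (use d0 in auto)
  have "M1 p m r x = G * A_mat p m r a * H"
    unfolding M1_def gx GL_scale[OF gl A_mat_carrier] d_def[symmetric] A_mat_smult[symmetric]
    unfolding x_def mk_simps e1 ..
  moreover have "N2 p m r x = G * four_block_mat (Bt p m b c) (0\<^sub>m ?s r) (0\<^sub>m r ?s) J * H"
  proof -
    have fc: "four_block_mat (Bt p m (bx x) (cx x)) (0\<^sub>m ?s r) (0\<^sub>m r ?s) (tx r x) \<in> carrier_mat ?n ?n"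
      by (rule fb_carrier) auto
    have "d \<cdot>\<^sub>m four_block_mat (Bt p m (bx x) (cx x)) (0\<^sub>m ?s r) (0\<^sub>m r ?s) (tx r x) =
          four_block_mat (d \<cdot>\<^sub>m Bt p m (bx x) (cx x)) (d \<cdot>\<^sub>m 0\<^sub>m ?s r) (d \<cdot>\<^sub>m 0\<^sub>m r ?s) (d \<cdot>\<^sub>m tx r x)"
      by (rule smult_four_block_mat) auto
    also have "\<dots> = four_block_mat (Bt p m b c) (0\<^sub>m ?s r) (0\<^sub>m r ?s) J"
      unfolding Bt_smult[symmetric] tx eJ smult_zero_mat unfolding x_def mk_simps e1 ..
    finally show ?thesis unfolding N2_def gx GL_scale[OF gl fc[unfolded gx]] d_def[symmetric] by simp
  qed
  ultimately show ?thesis using all[of x] by simp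
qed

lemma G_sub_Im: "Gset p m r \<subseteq> zariski_closure (2*p+m+r) (phi_image p m r)"
proof
  let ?n = "2*p+m+r" and ?s = "2*p+m"
  let ?K = "\<lambda>P. four_block_mat (1\<^sub>m ?s) (0\<^sub>m ?s r) (0\<^sub>m r ?s) P"
  fix s assume "s \<in> Gset p m r"
  then obtain g h a B where s: "s = (g * A_mat p m r a * h, g * B * h)" and gl: "GL_inv ?n g h"
    and gen: "generic_params p m a" and ac: "(A_mat p m r a, B) \<in> anticomm_var ?n"
    unfolding Gset_def by blast
  have Bc: "B \<in> carrier_mat ?n ?n" using ac unfolding anticomm_var_def by auto
  have gc: "g \<in> carrier_mat ?n ?n" "h \<in> carrier_mat ?n ?n" using gl unfolding GL_inv_def by auto
  define C where "C = mat r r (\<lambda>(i,j). B $$ (i + ?s, j + ?s))"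
  define bb where "bb = (\<lambda>k. B $$ (2*k, 2*k+1))"
  define cc where "cc = (\<lambda>k. B $$ (2*k+1, 2*k))"
  have Bs: "B = four_block_mat (Bt p m bb cc) (0\<^sub>m ?s r) (0\<^sub>m r ?s) C"
    unfolding C_def bb_def cc_def by (rule B_structure[OF gen Bc ac])
  have Cc: "C \<in> carrier_mat r r" unfolding C_def by auto
  obtain as where "char_poly C = (\<Prod>a\<leftarrow>as. [:- a, 1:])" using char_poly_factorized[OF Cc] by blast
  then obtain n_as where jnf: "jordan_nf C n_as" using jordan_nf_exists[OF Cc] by blast
  let ?J = "jordan_matrix n_as"
  have "similar_mat C ?J" using jnf unfolding jordan_nf_def by auto
  then obtain P Q where wit: "similar_mat_wit C ?J P Q" unfolding similar_mat_def by blast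
  have dC: "dim_row C = r" using Cc by auto
  have PQ: "{C, ?J, P, Q} \<subseteq> carrier_mat r r" "P * Q = 1\<^sub>m r" "Q * P = 1\<^sub>m r" "C = P * ?J * Q"
    using wit unfolding similar_mat_wit_def Let_def dC by blast+
  have Jc: "?J \<in> carrier_mat r r" and Pc: "P \<in> carrier_mat r r" and Qc: "Q \<in> carrier_mat r r" using PQ(1) by auto
  have "sum_list (map fst n_as) = dim_row ?J" by (rule jordan_matrix_dim(1)[symmetric])
  also have "\<dots> = r" using Jc by (rule carrier_matD(1))
  finally have sl: "sum_list (map fst n_as) = r" .
  have Jut: "?J $$ (i,j) = 0" if "i < r" "j < i" for i j
    using jordan_matrix_upper_triangular[of i n_as j] that sl by simp
  have glK: "GL_inv ?n (?K P) (?K Q)" using GL_four[OF Pc Qc PQ(2,3), of ?s] by simp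
  have KB: "B = ?K P * four_block_mat (Bt p m bb cc) (0\<^sub>m ?s r) (0\<^sub>m r ?s) ?J * ?K Q"
    unfolding conj_four[OF Bt_carrier Jc Pc Qc] Bs PQ(4) ..
  have KA: "A_mat p m r a = ?K P * A_mat p m r a * ?K Q" using A_conj[OF Pc Qc] by simp
  have Kc: "?K P \<in> carrier_mat ?n ?n" "?K Q \<in> carrier_mat ?n ?n" using glK unfolding GL_inv_def by auto
  have as: "g * (?K P * M * ?K Q) * h = (g * ?K P) * M * (?K Q * h)" if "M \<in> carrier_mat ?n ?n" for M
    using gc Kc that by (simp add: assoc_mult_mat[of _ ?n ?n _ ?n _ ?n])
  have fbc: "four_block_mat (Bt p m bb cc) (0\<^sub>m ?s r) (0\<^sub>m r ?s) ?J \<in> carrier_mat ?n ?n"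
    by (rule fb_carrier[OF Bt_carrier Jc])
  have s2: "s = ((g * ?K P) * A_mat p m r a * (?K Q * h), (g * ?K P) * four_block_mat (Bt p m bb cc) (0\<^sub>m ?s r) (0\<^sub>m r ?s) ?J * (?K Q * h))"
  proof -
    have "g * A_mat p m r a * h = g * (?K P * A_mat p m r a * ?K Q) * h"
      by (subst KA) (rule refl)
    also have "\<dots> = (g * ?K P) * A_mat p m r a * (?K Q * h)" by (rule as[OF A_mat_carrier])
    finally have 1: "g * A_mat p m r a * h = (g * ?K P) * A_mat p m r a * (?K Q * h)" .
    have "g * B * h = g * (?K P * four_block_mat (Bt p m bb cc) (0\<^sub>m ?s r) (0\<^sub>m r ?s) ?J * ?K Q) * h"
      by (subst KB) (rule refl)
    also have "\<dots> = (g * ?K P) * four_block_mat (Bt p m bb cc) (0\<^sub>m ?s r) (0\<^sub>m r ?s) ?J * (?K Q * h)" by (rule as[OF fbc])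
    finally have 2: "g * B * h = (g * ?K P) * four_block_mat (Bt p m bb cc) (0\<^sub>m ?s r) (0\<^sub>m r ?s) ?J * (?K Q * h)" .
    note 1 2
    show ?thesis using s 1 2 by simp
  qed
  show "s \<in> zariski_closure ?n (phi_image p m r)"
  proof (rule in_closureI)
    show "s \<in> pair_space ?n" unfolding s pair_space_def using gc Bc by auto
    fix f assume f: "f \<in> poly_fun ?n" "\<forall>t\<in>phi_image p m r. f t = 0"
    show "f s = 0" unfolding s2
      by (rule vanish_upper[OF f GL_mult[OF gl glK] Jc Jut])
  qed
qed

theorem main_thm:
  assumes "2*p + m + r = n"
  shows "zariski_irreducible n (Z_pmr p m r) \<and> Z_pmr p m r = zariski_closure n (phi_image p m r)"
proof -
  have eq: "Z_pmr p m r = zariski_closure (2*p+m+r) (phi_image p m r)"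
  proof
    show "Z_pmr p m r \<subseteq> zariski_closure (2*p+m+r) (phi_image p m r)"
      unfolding Z_pmr_Gset by (rule closure_mono2[OF G_sub_Im])
    show "zariski_closure (2*p+m+r) (phi_image p m r) \<subseteq> Z_pmr p m r"
      unfolding Z_pmr_Gset by (rule closure_mono2[OF Im_sub_G])
  qed
  show ?thesis using eq irreducible_closure_Im[of p m r] assms by simp
qed

theorem proposition3p2:
  fixes p m r n :: nat
  assumes "2*p + m + r = n"
  shows "zariski_irreducible n (Z_pmr p m r) \<and>
         Z_pmr p m r = zariski_closure n (phi_image p m r)"
  using main_thm[OF assms] .

end
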